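(* Let $q>2$, $n\ge2$. For any $\lambda,\Lambda,M>0$ there is a radius $R=R(\lambda,\Lambda,M,n,q)>0$ such that for every curve $u\in\mathcal C$ with $\lambda\le|u'|\le\Lambda$ and $\mathrm{TP}(u)\le M$, and every $\tilde u\in W^{2-1/q,q}(\mathbb{R}/\mathbb{Z},\mathbb{R}^n)$ with $\|(\tilde u-u)'\|_{L^\infty}\le R$, one has $\mathrm{bil}(\tilde u)\le2\,\mathrm{bil}(u)<\infty$.
   Context: $\mathcal C=\{u\in W^{2-1/q,q}(\mathbb{R}/\mathbb{Z},\mathbb{R}^n): u\text{ injective and }\min|u'|>0\}$, where $W^{2-1/q,q}$ consists of $L^q$ functions $u$ whose derivative has finite seminorm $[u']_{W^{1-1/q,q}}=\big(\iint\frac{|u'(x)-u'(y)|^q}{|x-y|^{q}}dx\,dy\big)^{1/q}$. \[\mathrm{TP}(u)=\frac1q\iint_{\mathbb{R}/\mathbb{Z}\times\mathbb{R}/\mathbb{Z}}\frac{|u'(y)\wedge(u(x)-u(y))|^q}{|u(x)-u(y)|^{2q}}\,dx\,dy,\] with $|a\wedge b|$ defined via $\langle a\wedge b,c\wedge d\rangle=\langle a,c\rangle\langle b,d\rangle-\langle a,d\rangle\langle b,c\rangle$. $\mathrm{bil}(u)=\sup_{x\ne y}\frac{|x-y|}{|u(x)-u(y)|}$ with $|x-y|$ the distance in $\mathbb{R}/\mathbb{Z}$. *)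

theory Defs
  imports "HOL-Analysis.Analysis"
begin

text \<open>Curves on R/Z are represented as 1-periodic maps on the reals.
  Distance in R/Z.\<close>
definition circ_dist :: "real \<Rightarrow> real \<Rightarrow> real" where
  "circ_dist x y = min (frac (x - y)) (1 - frac (x - y))"

definition periodic1 :: "(real \<Rightarrow> 'a) \<Rightarrow> bool" where
  "periodic1 u \<longleftrightarrow> (\<forall>x. u (x + 1) = u x)"

abbreviation dv :: "(real \<Rightarrow> 'a::real_normed_vector) \<Rightarrow> real \<Rightarrow> 'a" where
  "dv u x \<equiv> vector_derivative u (at x)"

text \<open>Gagliardo seminorm of u' in W^{1-1/q,q}(R/Z), to the power q.\<close>
definition seminorm_q :: "real \<Rightarrow> (real \<Rightarrow> 'a::real_normed_vector) \<Rightarrow> ennreal" where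
  "seminorm_q q u = (\<integral>\<^sup>+ x. \<integral>\<^sup>+ y.
      ennreal (norm (dv u x - dv u y) powr q / circ_dist x y powr q)
        * indicator {0..1} x * indicator {0..1} y \<partial>lborel \<partial>lborel)"

text \<open>W^{2-1/q,q}(R/Z,R^n) for q > 2 (continuous representatives; by Sobolev
  embedding such functions are C^1).\<close>
definition W_space :: "real \<Rightarrow> (real \<Rightarrow> 'a::euclidean_space) set" where
  "W_space q = {u. periodic1 u \<and> (\<forall>x. u differentiable (at x))
      \<and> continuous_on UNIV (dv u) \<and> seminorm_q q u < \<infinity>}"

definition curve_class :: "real \<Rightarrow> (real \<Rightarrow> 'a::euclidean_space) set" where
  "curve_class q = {u \<in> W_space q. inj_on u {0..<1}
      \<and> (\<exists>c>0. \<forall>x. c \<le> norm (dv u x))}"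

definition wedge_norm :: "'a::real_inner \<Rightarrow> 'a \<Rightarrow> real" where
  "wedge_norm a b = sqrt ((norm a)\<^sup>2 * (norm b)\<^sup>2 - (a \<bullet> b)\<^sup>2)"

definition TP :: "real \<Rightarrow> (real \<Rightarrow> 'a::euclidean_space) \<Rightarrow> ennreal" where
  "TP q u = ennreal (1 / q) * (\<integral>\<^sup>+ x. \<integral>\<^sup>+ y.
      ennreal (wedge_norm (dv u y) (u x - u y) powr q / norm (u x - u y) powr (2 * q))
        * indicator {0..1} x * indicator {0..1} y \<partial>lborel \<partial>lborel)"

definition bil :: "(real \<Rightarrow> 'a::real_normed_vector) \<Rightarrow> ereal" where
  "bil u = (SUP p \<in> {(x, y). x \<in> {0..<1} \<and> y \<in> {0..<1} \<and> x \<noteq> y}.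
      (if u (fst p) = u (snd p) then \<infinity>
       else ereal (circ_dist (fst p) (snd p) / norm (u (fst p) - u (snd p)))))"

end

theory Submission
  imports Defs
begin


locale curve =
  fixes u :: "real \<Rightarrow> 'a::euclidean_space" and lam Lam q :: real
  assumes per: "periodic1 u"
    and diff: "\<And>x. u differentiable (at x)"
    and cont: "continuous_on UNIV (dv u)"
    and lbnd: "\<And>x. lam \<le> norm (dv u x)"
    and ubnd: "\<And>x. norm (dv u x) \<le> Lam"
    and inj: "inj_on u {0..<1}"
    and lam_pos: "lam > 0"
    and q2: "q > 2"
begin

lemma lam_le_Lam: "lam \<le> Lam"
  using lbnd[of 0] ubnd[of 0] by linarith

lemma Lam_pos: "Lam > 0"
  using lam_le_Lam lam_pos by linarith

lemma u1: "u (x + 1) = u x"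
  using per unfolding periodic1_def by blast

lemma u_nat: "u (x + real n) = u x"
proof (induction n arbitrary: x)
  case 0 then show ?case by simp
next
  case (Suc n)
  have "u (x + real (Suc n)) = u ((x + real n) + 1)" by (simp add: algebra_simps)
  also have "\<dots> = u (x + real n)" by (rule u1)
  finally show ?case using Suc by simp
qed

lemma u_int: "u (x + real_of_int k) = u x"
proof (cases "k \<ge> 0")
  case True
  then obtain n where "k = int n" by (metis nonneg_eq_int)
  then show ?thesis using u_nat by simp
next
  case False
  define n where "n = nat (- k)"
  have n: "k = - int n" using False unfolding n_def by simp
  have "u x = u ((x + real_of_int k) + real n)" using n by simp
  then show ?thesis using u_nat by metis
qed

lemma u_frac: "u x = u (frac x)"
proof -
  have "x = frac x + real_of_int \<lfloor>x\<rfloor>" by (simp add: frac_def)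
  then show ?thesis using u_int by metis
qed

lemma u_eq_imp: assumes "u x = u y" shows "x - y \<in> \<int>"
proof -
  have "u (frac x) = u (frac y)" using assms u_frac by metis
  moreover have "frac x \<in> {0..<1}" "frac y \<in> {0..<1}" by (auto simp: frac_lt_1)
  ultimately have "frac x = frac y" using inj by (meson inj_onD)
  then have "x - y = real_of_int (\<lfloor>x\<rfloor> - \<lfloor>y\<rfloor>)" by (simp add: frac_def)
  then show ?thesis by simp
qed

lemma u_neq: assumes "x \<noteq> y" "\<bar>x - y\<bar> < 1" shows "u x \<noteq> u y"
proof
  assume "u x = u y"
  then have "x - y \<in> \<int>" by (rule u_eq_imp)
  then obtain k where k: "x - y = real_of_int k" by (auto elim: Ints_cases)
  then have "k \<noteq> 0" using assms by auto
  then have "\<bar>real_of_int k\<bar> \<ge> 1" by linarith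
  then show False using assms k by simp
qed

lemma hvd: "(u has_vector_derivative dv u x) (at x)"
  using diff vector_derivative_works by blast

lemma hvd_within: "(u has_vector_derivative dv u x) (at x within S)"
  using hvd has_vector_derivative_at_within by blast

lemma u_cont: "continuous_on S u"
  using diff differentiable_imp_continuous_on differentiable_at_imp_differentiable_on by blast

lemma u_cont_at: "isCont u x"
  using diff differentiable_imp_continuous_within by blast

lemma dv_cont_on: "continuous_on S (dv u)"
  using cont continuous_on_subset by blast

lemma dv_isCont: "isCont (dv u) x"
  using cont continuous_on_eq_continuous_at by blast

lemma dv1: "dv u (x + 1) = dv u x"
proof -
  have d1: "((\<lambda>t. t + 1) has_vector_derivative 1) (at x)"
    by (auto intro!: derivative_eq_intros simp: has_real_derivative_iff_has_vector_derivative[symmetric])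
  have "((u \<circ> (\<lambda>t. t + 1)) has_vector_derivative (1 *\<^sub>R dv u (x + 1))) (at x)"
    by (rule vector_diff_chain_at[OF d1]) (simp add: hvd)
  then have "((\<lambda>t. u (t + 1)) has_vector_derivative dv u (x + 1)) (at x)" by (simp add: o_def)
  moreover have "(\<lambda>t. u (t + 1)) = u" using u1 by auto
  ultimately show ?thesis using hvd[of x] vector_derivative_unique_at by metis
qed

lemma dv_nat: "dv u (x + real n) = dv u x"
proof (induction n arbitrary: x)
  case 0 then show ?case by simp
next
  case (Suc n)
  have "dv u (x + real (Suc n)) = dv u ((x + real n) + 1)" by (simp add: algebra_simps)
  also have "\<dots> = dv u (x + real n)" by (rule dv1)
  finally show ?case using Suc by simp
qed

lemma dv_int: "dv u (x + real_of_int k) = dv u x"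
proof (cases "k \<ge> 0")
  case True
  then obtain n where "k = int n" by (metis nonneg_eq_int)
  then show ?thesis using dv_nat by simp
next
  case False
  define n where "n = nat (- k)"
  have n: "k = - int n" using False unfolding n_def by simp
  have "dv u x = dv u ((x + real_of_int k) + real n)" using n by simp
  then show ?thesis using dv_nat by metis
qed

lemma ftc: assumes "a \<le> b" shows "(dv u has_integral (u b - u a)) {a..b}"
  by (rule fundamental_theorem_of_calculus[OF assms]) (rule hvd_within)

lemma normdv_cont: "continuous_on S (\<lambda>t. norm (dv u t))"
  by (intro continuous_intros dv_cont_on)

definition L :: "real \<Rightarrow> real \<Rightarrow> real" where
  "L a b = integral {a..b} (\<lambda>t. norm (dv u t))"

lemma L_int: "(\<lambda>t. norm (dv u t)) integrable_on {a..b}"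
  by (rule integrable_continuous_interval[OF normdv_cont])

lemma dv_int_on: "(dv u) integrable_on {a..b}"
  by (rule integrable_continuous_interval[OF dv_cont_on])

lemma chord_le_L: assumes "a \<le> b" shows "norm (u b - u a) \<le> L a b"
proof -
  have "u b - u a = integral {a..b} (dv u)" using ftc[OF assms] by (simp add: integral_unique)
  then show ?thesis unfolding L_def
    using integral_norm_bound_integral[OF dv_int_on L_int, of a b] by simp
qed

lemma L_add: assumes "a \<le> c" "c \<le> b" shows "L a c + L c b = L a b"
  unfolding L_def using Henstock_Kurzweil_Integration.integral_combine[OF assms L_int] .

lemma L_lower: assumes "a \<le> b" shows "lam * (b - a) \<le> L a b"
proof -
  have "integral {a..b} (\<lambda>t. lam) \<le> integral {a..b} (\<lambda>t. norm (dv u t))"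
    by (rule integral_le) (auto intro: L_int lbnd)
  then show ?thesis using assms unfolding L_def by (simp add: algebra_simps)
qed

lemma L_upper: assumes "a \<le> b" shows "L a b \<le> Lam * (b - a)"
proof -
  have "integral {a..b} (\<lambda>t. norm (dv u t)) \<le> integral {a..b} (\<lambda>t. Lam)"
    by (rule integral_le) (auto intro: L_int ubnd)
  then show ?thesis using assms unfolding L_def by (simp add: algebra_simps)
qed

lemma chord_Lam: assumes "a \<le> b" shows "norm (u b - u a) \<le> Lam * (b - a)"
  using chord_le_L[OF assms] L_upper[OF assms] by linarith

lemma chord_Lam_abs: "norm (u b - u a) \<le> Lam * \<bar>b - a\<bar>"
proof (cases "a \<le> b")
  case True then show ?thesis using chord_Lam by simp
next
  case False then show ?thesis using chord_Lam[of b a] by (simp add: norm_minus_commute)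
qed

lemma dv_unif: assumes "e > 0"
  shows "\<exists>d>0. d \<le> 1 \<and> (\<forall>a t. \<bar>t - a\<bar> \<le> d \<longrightarrow> norm (dv u t - dv u a) \<le> e)"
proof -
  have "uniformly_continuous_on {-2..3} (dv u)"
    by (rule compact_uniformly_continuous[OF dv_cont_on compact_Icc])
  then obtain d where d: "d > 0" and dd: "\<And>x x'. x \<in> {-2..3} \<Longrightarrow> x' \<in> {-2..3} \<Longrightarrow> dist x' x < d \<Longrightarrow> dist (dv u x') (dv u x) < e"
    unfolding uniformly_continuous_on_def using assms by metis
  define d' where "d' = min 1 (d/2)"
  have "norm (dv u t - dv u a) \<le> e" if "\<bar>t - a\<bar> \<le> d'" for a t
  proof -
    define k where "k = \<lfloor>a\<rfloor>"
    have a1: "a - k \<in> {0..<1}" unfolding k_def by (simp add: floor_le_iff) linarith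
    have "dv u (a - k) = dv u a" using dv_int[of "a - k" k] by simp
    moreover have "dv u (t - k) = dv u t" using dv_int[of "t - k" k] by simp
    moreover have "t - k \<in> {-2..3}" using a1 that unfolding d'_def by auto
    moreover have "a - k \<in> {-2..3}" using a1 by auto
    moreover have "dist (t - k) (a - k) < d" using that d unfolding d'_def dist_real_def by auto
    ultimately show ?thesis using dd[of "a - k" "t - k"] by (simp add: dist_norm)
  qed
  moreover have "d' > 0" "d' \<le> 1" using d unfolding d'_def by auto
  ultimately show ?thesis by blast
qed

lemma lin_approx: assumes "e > 0"
  shows "\<exists>d>0. d \<le> 1 \<and> (\<forall>a b. a \<le> b \<longrightarrow> b - a \<le> d \<longrightarrow>
      norm (u b - u a - (b - a) *\<^sub>R dv u a) \<le> e * (b - a) \<and> L a b \<le> (norm (dv u a) + e) * (b - a))"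
proof -
  obtain d where d: "d > 0" "d \<le> 1" and dd: "\<And>a t. \<bar>t - a\<bar> \<le> d \<Longrightarrow> norm (dv u t - dv u a) \<le> e"
    using dv_unif[OF assms] by blast
  have "norm (u b - u a - (b - a) *\<^sub>R dv u a) \<le> e * (b - a) \<and> L a b \<le> (norm (dv u a) + e) * (b - a)"
    if ab: "a \<le> b" "b - a \<le> d" for a b
  proof
    have "((\<lambda>t. dv u t - dv u a) has_integral (u b - u a - (b - a) *\<^sub>R dv u a)) {a..b}"
      using has_integral_diff[OF ftc[OF ab(1)] has_integral_const_real[of "dv u a" a b]] ab by simp
    then show "norm (u b - u a - (b - a) *\<^sub>R dv u a) \<le> e * (b - a)"
      using has_integral_bound[of e "\<lambda>t. dv u t - dv u a" _ a b] dd ab assms by auto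
    have "integral {a..b} (\<lambda>t. norm (dv u t)) \<le> integral {a..b} (\<lambda>t. norm (dv u a) + e)"
    proof (rule integral_le[OF L_int])
      show "(\<lambda>t. norm (dv u a) + e) integrable_on {a..b}" by (rule integrable_const_ivl)
      fix t assume "t \<in> {a..b}"
      then have "norm (dv u t - dv u a) \<le> e" using dd ab by auto
      then show "norm (dv u t) \<le> norm (dv u a) + e" using norm_triangle_sub[of "dv u t" "dv u a"] by linarith
    qed
    then show "L a b \<le> (norm (dv u a) + e) * (b - a)" using ab unfolding L_def by (simp add: mult.commute)
  qed
  then show ?thesis using d by blast
qed

end


lemma per_nat: fixes F :: "real \<Rightarrow> 'b" assumes "\<And>y. F (y + 1) = F y" shows "F (y + real n) = F y"
proof (induction n arbitrary: y)
  case 0 then show ?case by simp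
next
  case (Suc n)
  have "F (y + real (Suc n)) = F ((y + real n) + 1)" by (simp add: algebra_simps)
  then show ?case using Suc assms by simp
qed

lemma per_int: fixes F :: "real \<Rightarrow> 'b" assumes "\<And>y. F (y + 1) = F y" shows "F (y + real_of_int k) = F y"
proof (cases "k \<ge> 0")
  case True
  then obtain n where "k = int n" by (metis nonneg_eq_int)
  then show ?thesis using per_nat[of F, OF assms] by simp
next
  case False
  define n where "n = nat (- k)"
  have n: "k = - int n" using False unfolding n_def by simp
  have "F y = F ((y + real_of_int k) + real n)" using n by simp
  then show ?thesis using per_nat[of F, OF assms] by metis
qed

lemma per_lower01:
  fixes F g :: "real \<Rightarrow> real"
  assumes per: "\<And>y. F (y + 1) = F y" and ab: "\<alpha> \<le> \<beta>" "\<beta> - \<alpha> < 1" and a0: "0 \<le> \<alpha>" "\<alpha> < 1"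
    and g: "(g has_integral I) {\<alpha>..\<beta>}"
    and gpos: "\<And>y. y \<in> {\<alpha>..\<beta>} \<Longrightarrow> 0 \<le> g y"
    and gle: "\<And>y. y \<in> {\<alpha>..\<beta>} \<Longrightarrow> g y \<le> F y"
  shows "ennreal I \<le> (\<integral>\<^sup>+y. ennreal (F y) * indicator {0..1} y \<partial>lborel)"
proof -
  define h where "h y = (if \<alpha> \<le> y \<and> y \<le> \<beta> then g y else if y + 1 \<le> \<beta> then g (y + 1) else 0)" for y
  have hpos: "0 \<le> h y" if "y \<in> {0..1}" for y
    unfolding h_def using gpos that a0 ab by auto
  have hle: "ennreal (h y) \<le> ennreal (F y)" if "y \<in> {0..1}" for y
  proof -
    have "F (y + 1) = F y" by (rule per)
    moreover have "g (y + 1) \<le> F (y + 1)" if "y + 1 \<le> \<beta>" "0 \<le> y" using gle[of "y+1"] that a0 by auto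
    ultimately show ?thesis unfolding h_def using gle that a0 ab by (auto intro: ennreal_leI)
  qed
  have hint: "(h has_integral I) {0..1}"
  proof (cases "\<beta> \<le> 1")
    case True
    have h1: "(h has_integral 0) {0..\<alpha>}"
      by (rule has_integral_spike_finite[where S="{0, \<alpha>}" and f="\<lambda>_. 0"]) (use True a0 ab in \<open>auto simp: h_def\<close>)
    have h2: "(h has_integral I) {\<alpha>..\<beta>}"
      by (rule has_integral_spike_finite[where S="{}" and f=g]) (use g in \<open>auto simp: h_def\<close>)
    have h3: "(h has_integral 0) {\<beta>..1}"
      by (rule has_integral_spike_finite[where S="{\<beta>}" and f="\<lambda>_. 0"]) (use True a0 ab in \<open>auto simp: h_def\<close>)
    have h12: "(h has_integral (0 + I)) {0..\<beta>}" by (rule has_integral_combine[OF _ _ h1 h2]) (use a0 ab in auto)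
    have "(h has_integral (0 + I + 0)) {0..1}" by (rule has_integral_combine[OF _ _ h12 h3]) (use a0 ab True in auto)
    then show ?thesis by simp
  next
    case False
    have gi: "g integrable_on {\<alpha>..\<beta>}" using g by blast
    have gi1: "g integrable_on {\<alpha>..1}" by (rule integrable_subinterval_real[OF gi]) (use False in auto)
    have gi2: "g integrable_on {1..\<beta>}" by (rule integrable_subinterval_real[OF gi]) (use False a0 in auto)
    have Isplit: "integral {\<alpha>..1} g + integral {1..\<beta>} g = I"
      using Henstock_Kurzweil_Integration.integral_combine[OF _ _ gi] False a0 g integral_unique by force
    have g2: "((\<lambda>y. g (y + 1)) has_integral integral {1..\<beta>} g) {0..\<beta> - 1}"
      using has_integral_shift_real_ivl[OF integrable_integral[OF gi2], of 1] by simp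
    have h1: "(h has_integral integral {1..\<beta>} g) {0..\<beta> - 1}"
      by (rule has_integral_spike_finite[OF _ _ g2, of "{}"]) (use False a0 ab in \<open>auto simp: h_def\<close>)
    have h2: "(h has_integral 0) {\<beta> - 1..\<alpha>}"
      by (rule has_integral_spike_finite[where S="{\<beta> - 1, \<alpha>}" and f="\<lambda>_. 0"]) (use False a0 ab in \<open>auto simp: h_def\<close>)
    have h3: "(h has_integral integral {\<alpha>..1} g) {\<alpha>..1}"
      by (rule has_integral_spike_finite[OF _ _ integrable_integral[OF gi1], of "{}"]) (use False a0 ab in \<open>auto simp: h_def\<close>)
    have h12: "(h has_integral (integral {1..\<beta>} g + 0)) {0..\<alpha>}" by (rule has_integral_combine[OF _ _ h1 h2]) (use a0 ab False in auto)
    have "(h has_integral (integral {1..\<beta>} g + 0 + integral {\<alpha>..1} g)) {0..1}"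
      by (rule has_integral_combine[OF _ _ h12 h3]) (use a0 ab False in auto)
    then show ?thesis using Isplit by (simp add: algebra_simps)
  qed
  have "(\<integral>\<^sup>+y. ennreal (indicator {0..1} y * h y) \<partial>lborel) = ennreal I"
    by (rule nn_integral_has_integral_lebesgue[OF hpos hint])
  moreover have "(\<integral>\<^sup>+y. ennreal (indicator {0..1} y * h y) \<partial>lborel) \<le> (\<integral>\<^sup>+y. ennreal (F y) * indicator {0..1} y \<partial>lborel)"
    by (rule nn_integral_mono) (auto simp: indicator_def hle)
  ultimately show ?thesis by simp
qed

lemma per_lower:
  fixes F g :: "real \<Rightarrow> real"
  assumes per: "\<And>y. F (y + 1) = F y" and ab: "\<alpha> \<le> \<beta>" "\<beta> - \<alpha> < 1"
    and g: "(g has_integral I) {\<alpha>..\<beta>}"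
    and gpos: "\<And>y. y \<in> {\<alpha>..\<beta>} \<Longrightarrow> 0 \<le> g y"
    and gle: "\<And>y. y \<in> {\<alpha>..\<beta>} \<Longrightarrow> g y \<le> F y"
  shows "ennreal I \<le> (\<integral>\<^sup>+y. ennreal (F y) * indicator {0..1} y \<partial>lborel)"
proof -
  define k where "k = real_of_int \<lfloor>\<alpha>\<rfloor>"
  have k: "0 \<le> \<alpha> - k" "\<alpha> - k < 1" unfolding k_def by linarith+
  have g': "((\<lambda>y. g (y + k)) has_integral I) {\<alpha> - k..\<beta> - k}"
    using has_integral_shift_real_ivl[OF g] .
  show ?thesis
  proof (rule per_lower01[of F, OF per _ _ k g'])
    fix y assume y: "y \<in> {\<alpha> - k..\<beta> - k}"
    then show "0 \<le> g (y + k)" using gpos by auto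
    have "F (y + k) = F y" unfolding k_def by (rule per_int[of F, OF per])
    then show "g (y + k) \<le> F y" using gle[of "y + k"] y by auto
  qed (use ab in auto)
qed

lemma per_outer:
  fixes G :: "real \<Rightarrow> ennreal"
  assumes per: "\<And>x. G (x + 1) = G x" and w: "0 \<le> w" "w \<le> 1"
    and K: "\<And>x. x \<in> {p..p+w} \<Longrightarrow> K \<le> G x"
  shows "K * ennreal w \<le> (\<integral>\<^sup>+x. G x * indicator {0..1} x \<partial>lborel)"
proof -
  define k where "k = real_of_int \<lfloor>p\<rfloor>"
  define p' where "p' = p - k"
  have p': "0 \<le> p'" "p' < 1" unfolding p'_def k_def by linarith+
  have K': "K \<le> G x" if "x \<in> {p'..p'+w}" for x
  proof -
    have "G (x + k) = G x" unfolding k_def by (rule per_int[of G, OF per])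
    then show ?thesis using K[of "x + k"] that unfolding p'_def by auto
  qed
  show ?thesis
  proof (cases "p' + w \<le> 1")
    case True
    have "(\<integral>\<^sup>+x. K * indicator {p'..p'+w} x \<partial>lborel) \<le> (\<integral>\<^sup>+x. G x * indicator {0..1} x \<partial>lborel)"
      by (rule nn_integral_mono) (use K' True p' in \<open>auto simp: indicator_def\<close>)
    moreover have "(\<integral>\<^sup>+x. K * indicator {p'..p'+w} x \<partial>lborel) = K * ennreal w"
      using w by (simp add: nn_integral_cmult_indicator)
    ultimately show ?thesis by simp
  next
    case False
    have "(\<integral>\<^sup>+x. K * indicator {p'..1} x + K * indicator {0..<p'+w-1} x \<partial>lborel) \<le> (\<integral>\<^sup>+x. G x * indicator {0..1} x \<partial>lborel)"
    proof (rule nn_integral_mono)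
      fix x
      show "K * indicator {p'..1} x + K * indicator {0..<p'+w-1} x \<le> G x * indicator {0..1} x"
      proof (cases "x \<in> {p'..1}")
        case True
        then have "x \<notin> {0..<p'+w-1}" using w by auto
        then show ?thesis using True K' False p' by (auto simp: indicator_def)
      next
        case F: False
        show ?thesis
        proof (cases "x \<in> {0..<p'+w-1}")
          case True
          have "G (x + 1) = G x" by (rule per)
          moreover have "K \<le> G (x + 1)" using True K' w p' by auto
          ultimately show ?thesis using True F p' w by (auto simp: indicator_def)
        qed (use F in \<open>auto simp: indicator_def\<close>)
      qed
    qed
    moreover have "(\<integral>\<^sup>+x. K * indicator {p'..1} x + K * indicator {0..<p'+w-1} x \<partial>lborel) = K * ennreal (1 - p') + K * ennreal (p' + w - 1)"
      using False p' by (subst nn_integral_add) (auto simp: nn_integral_cmult_indicator)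
    moreover have "K * ennreal (1 - p') + K * ennreal (p' + w - 1) = K * ennreal w"
      using False p' by (simp add: distrib_left[symmetric] ennreal_plus[symmetric] del: ennreal_plus)
    ultimately show ?thesis by simp
  qed
qed


lemma dq_tendsto:
  fixes f :: "real \<Rightarrow> 'b::real_normed_vector"
  assumes "(f has_vector_derivative D) (at x)"
  shows "((\<lambda>h. (1/h) *\<^sub>R (f (x + h) - f x)) \<longlongrightarrow> D) (at 0)"
proof -
  have "(\<lambda>h. norm (f (x + h) - f x - h *\<^sub>R D) / norm h) \<midarrow>0\<rightarrow> 0"
    using assms unfolding has_vector_derivative_def has_derivative_at by blast
  moreover have eq: "norm (f (x + h) - f x - h *\<^sub>R D) / norm h = norm ((1/h) *\<^sub>R (f (x + h) - f x) - D)" if "h \<noteq> 0" for h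
  proof -
    have e1: "(1/h) *\<^sub>R (f (x + h) - f x) - D = (1/h) *\<^sub>R (f (x + h) - f x - h *\<^sub>R D)"
      using that by (simp add: algebra_simps)
    show ?thesis by (simp only: e1 norm_scaleR real_norm_def) (simp add: abs_divide)
  qed
  moreover have "\<forall>\<^sub>F h in at 0. norm (f (x + h) - f x - h *\<^sub>R D) / norm h = norm ((1/h) *\<^sub>R (f (x + h) - f x) - D)"
    using eq by (auto simp: eventually_at_filter)
  ultimately have "((\<lambda>h. norm ((1/h) *\<^sub>R (f (x + h) - f x) - D)) \<longlongrightarrow> 0) (at 0)"
    using tendsto_cong by force
  then show ?thesis by (simp add: tendsto_norm_zero_iff LIM_zero_iff)
qed

lemma eventually_at_right_exists:
  assumes "eventually P (at_right (0::real))" "e0 > 0"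
  shows "\<exists>e>0. e < e0 \<and> P e"
proof -
  obtain b where b: "b > 0" "\<And>y. y > 0 \<Longrightarrow> y < b \<Longrightarrow> P y"
    using assms(1) unfolding eventually_at_right_field by auto
  show ?thesis using b assms(2) by (intro exI[of _ "min b e0 / 2"]) auto
qed

lemma wedge_nonneg: "wedge_norm a b \<ge> 0"
proof -
  have "\<bar>a \<bullet> b\<bar>^2 \<le> (norm a * norm b)^2"
    by (rule power_mono[OF Cauchy_Schwarz_ineq2 abs_ge_zero])
  then have "(a \<bullet> b)^2 \<le> (norm a)^2 * (norm b)^2" by (simp add: power_mult_distrib)
  then show ?thesis unfolding wedge_norm_def by simp
qed

context curve begin

definition Fr :: "real \<Rightarrow> real \<Rightarrow> real" where
  "Fr x y = wedge_norm (dv u y) (u x - u y) powr q / norm (u x - u y) powr (2 * q)"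

definition sig :: "real \<Rightarrow> real \<Rightarrow> 'a" where
  "sig x y = (1 / norm (u y - u x)) *\<^sub>R (u y - u x)"

definition Sd :: "real \<Rightarrow> real \<Rightarrow> 'a" where
  "Sd x y = (1 / norm (u y - u x)) *\<^sub>R dv u y - (((u y - u x) \<bullet> dv u y) / norm (u y - u x) ^ 3) *\<^sub>R (u y - u x)"

definition inner_int :: "real \<Rightarrow> ennreal" where
  "inner_int x = (\<integral>\<^sup>+y. ennreal (Fr x y) * indicator {0..1} y \<partial>lborel)"

lemma Fr_per_y: "Fr x (y + 1) = Fr x y"
  unfolding Fr_def by (simp add: u1 dv1)

lemma Fr_per_x: "Fr (x + 1) y = Fr x y"
  unfolding Fr_def by (simp add: u1)

lemma inner_per: "inner_int (x + 1) = inner_int x"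
  unfolding inner_int_def by (simp add: Fr_per_x)

lemma sig_deriv: assumes "u y \<noteq> u x" shows "(sig x has_vector_derivative Sd x y) (at y)"
proof -
  define w where "w t = u t - u x" for t
  have wd: "(w has_vector_derivative dv u y) (at y)"
    unfolding w_def using hvd[of y] by (auto intro!: derivative_eq_intros)
  have w0: "w y \<noteq> 0" using assms unfolding w_def by simp
  have "((\<lambda>t. norm (w t)) has_derivative (\<lambda>h. (h *\<^sub>R dv u y) \<bullet> sgn (w y))) (at y)"
    by (rule has_derivative_compose[OF wd[unfolded has_vector_derivative_def] has_derivative_norm[OF w0]])
  then have rd: "((\<lambda>t. norm (w t)) has_real_derivative (dv u y \<bullet> sgn (w y))) (at y)"
    unfolding has_field_derivative_def o_def by (rule has_derivative_eq_rhs) (auto simp: fun_eq_iff inner_commute)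
  have "((\<lambda>t. (1 / norm (w t)) *\<^sub>R w t) has_vector_derivative
      ((1 / norm (w y)) *\<^sub>R dv u y + ((0 * norm (w y) - 1 * (dv u y \<bullet> sgn (w y))) / (norm (w y) * norm (w y))) *\<^sub>R w y)) (at y)"
    by (rule has_vector_derivative_scaleR[OF DERIV_divide[OF DERIV_const rd] wd]) (use w0 in simp)
  moreover have "(1 / norm (w y)) *\<^sub>R dv u y + ((0 * norm (w y) - 1 * (dv u y \<bullet> sgn (w y))) / (norm (w y) * norm (w y))) *\<^sub>R w y = Sd x y"
    unfolding Sd_def w_def[symmetric] using w0
    by (simp add: sgn_div_norm inner_scaleR_left inner_scaleR_right power3_eq_cube algebra_simps divide_simps inner_commute)
  moreover have "(\<lambda>t. (1 / norm (w t)) *\<^sub>R w t) = sig x"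
    unfolding sig_def w_def by auto
  ultimately show ?thesis by simp
qed

lemma Sd_cont: assumes "\<And>y. y \<in> S \<Longrightarrow> u y \<noteq> u x" shows "continuous_on S (Sd x)"
proof -
  have "continuous_on S (\<lambda>y. u y - u x)" by (intro continuous_intros u_cont)
  have nz: "\<And>y. y \<in> S \<Longrightarrow> norm (u y - u x) \<noteq> 0" using assms by simp
  show ?thesis unfolding Sd_def
    by (intro continuous_intros u_cont dv_cont_on) (use nz in auto)
qed

lemma norm_Sd: assumes "u y \<noteq> u x"
  shows "norm (Sd x y) = wedge_norm (dv u y) (u x - u y) / norm (u x - u y) ^ 2"
proof -
  define w where "w = u y - u x"
  define p where "p = dv u y"
  define r where "r = norm w"
  have r0: "r > 0" using assms unfolding r_def w_def by simp
  have Sdw: "Sd x y = (1 / r) *\<^sub>R p - ((w \<bullet> p) / r ^ 3) *\<^sub>R w"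
    unfolding Sd_def w_def p_def r_def by simp
  have ww: "w \<bullet> w = r ^ 2" unfolding r_def by (simp add: power2_norm_eq_inner)
  have "(norm (Sd x y))^2 = Sd x y \<bullet> Sd x y" by (simp add: power2_norm_eq_inner)
  also have "\<dots> = (p \<bullet> p) / r^2 - 2 * (w \<bullet> p)^2 / r^4 + (w \<bullet> p)^2 * (w \<bullet> w) / r^6"
    unfolding Sdw by (simp add: inner_diff_left inner_diff_right inner_commute power2_eq_square algebra_simps power_def divide_simps)
  also have "\<dots> = ((p \<bullet> p) * r^2 - (w \<bullet> p)^2) / r^4"
    unfolding ww using r0 by (simp add: divide_simps) (simp add: algebra_simps power_def)
  finally have n2: "(norm (Sd x y))^2 = ((norm p)^2 * r^2 - (w \<bullet> p)^2) / r^4"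
    by (simp add: power2_norm_eq_inner)
  have X: "(norm p)^2 * r^2 - (w \<bullet> p)^2 \<ge> 0"
  proof -
    have "\<bar>w \<bullet> p\<bar>^2 \<le> (norm w * norm p)^2"
      by (rule power_mono[OF Cauchy_Schwarz_ineq2 abs_ge_zero])
    then have "(w \<bullet> p)^2 \<le> (norm w * norm p)^2" by simp
    then show ?thesis unfolding r_def by (simp add: power_mult_distrib mult.commute)
  qed
  have r4: "sqrt (r^4) = r^2"
  proof -
    have "r^4 = (r^2)^2" by simp
    then show ?thesis by (simp only: real_sqrt_abs) simp
  qed
  have "norm (Sd x y) = sqrt ((norm (Sd x y))^2)" by simp
  also have "\<dots> = sqrt ((norm p)^2 * r^2 - (w \<bullet> p)^2) / r^2"
    unfolding n2 using r0 by (simp add: real_sqrt_divide r4)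
  finally have A: "norm (Sd x y) = sqrt ((norm p)^2 * r^2 - (w \<bullet> p)^2) / r^2" .
  have B: "wedge_norm (dv u y) (u x - u y) = sqrt ((norm p)^2 * r^2 - (w \<bullet> p)^2)"
  proof -
    have "u x - u y = - w" unfolding w_def by simp
    then show ?thesis unfolding wedge_norm_def p_def r_def
      by (simp only: norm_minus_cancel inner_minus_right power2_minus inner_commute[of "dv u y" w])
  qed
  have C: "norm (u x - u y) = r" unfolding r_def w_def by (simp add: norm_minus_commute)
  show ?thesis using A B C by simp
qed

lemma Fr_eq: assumes "u y \<noteq> u x" shows "Fr x y = norm (Sd x y) powr q"
proof -
  define r where "r = norm (u x - u y)"
  have r0: "r > 0" using assms unfolding r_def by simp
  have wn: "wedge_norm (dv u y) (u x - u y) \<ge> 0" by (rule wedge_nonneg)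
  have "r powr (2 * q) = (r^2) powr q"
    using r0 by (simp add: powr_powr[symmetric] powr_realpow)
  then have "Fr x y = wedge_norm (dv u y) (u x - u y) powr q / (r^2) powr q"
    unfolding Fr_def r_def by simp
  also have "\<dots> = (wedge_norm (dv u y) (u x - u y) / r^2) powr q"
    using wn r0 by (simp add: powr_divide)
  finally show ?thesis using norm_Sd[OF assms] unfolding r_def by simp
qed

lemma var_bound:
  assumes ab: "\<alpha> \<le> \<beta>" and ne: "\<And>y. y \<in> {\<alpha>..\<beta>} \<Longrightarrow> u y \<noteq> u x"
  shows "(\<lambda>y. norm (Sd x y)) integrable_on {\<alpha>..\<beta>}"
    and "norm (sig x \<beta> - sig x \<alpha>) \<le> integral {\<alpha>..\<beta>} (\<lambda>y. norm (Sd x y))"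
proof -
  have c: "continuous_on {\<alpha>..\<beta>} (Sd x)" by (rule Sd_cont[OF ne])
  show i: "(\<lambda>y. norm (Sd x y)) integrable_on {\<alpha>..\<beta>}"
    by (rule integrable_continuous_interval) (intro continuous_intros c)
  have "(Sd x has_integral (sig x \<beta> - sig x \<alpha>)) {\<alpha>..\<beta>}"
    by (rule fundamental_theorem_of_calculus[OF ab]) (use sig_deriv ne has_vector_derivative_at_within in blast)
  then show "norm (sig x \<beta> - sig x \<alpha>) \<le> integral {\<alpha>..\<beta>} (\<lambda>y. norm (Sd x y))"
    using integral_norm_bound_integral[OF _ i, of "Sd x"] by (metis integral_unique has_integral_integrable order_refl)
qed

end


lemma tangent_powr:
  fixes q c t :: real
  assumes q: "q \<ge> 1" and c: "c > 0" and t: "t \<ge> 0"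
  shows "(1 - q) * c powr q + q * c powr (q - 1) * t \<le> t powr q"
proof (cases "t = 0")
  case True
  have "(1 - q) * c powr q \<le> 0" using q c by (simp add: mult_nonpos_nonneg)
  then show ?thesis using True by simp
next
  case False
  then have t0: "t > 0" using t by simp
  have "t powr q - c powr q \<ge> (q * c powr (q - 1)) * (t - c)"
  proof (rule convex_on_imp_above_tangent[OF powr_convex[OF q]])
    show "connected {0::real<..}" by simp
    show "c \<in> interior {0<..}" using c by (simp add: interior_open)
    show "t \<in> {0<..}" using t0 by simp
    show "((\<lambda>x. x powr q) has_real_derivative q * c powr (q - 1)) (at c within {0<..})"
      by (rule has_field_derivative_at_within[OF has_real_derivative_powr[OF c]])
  qed
  moreover have "q * c powr (q - 1) * (t - c) = q * c powr (q - 1) * t - q * c powr q"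
  proof -
    have "c powr (q - 1) * c = c powr q" using c by (simp add: powr_diff)
    then show ?thesis by (simp add: algebra_simps)
  qed
  moreover have "(1 - q) * c powr q = c powr q - q * c powr q" by (simp add: algebra_simps)
  ultimately show ?thesis by linarith
qed

context curve begin

definition En :: ennreal where
  "En = (\<integral>\<^sup>+ x. \<integral>\<^sup>+ y. ennreal (Fr x y) * indicator {0..1} x * indicator {0..1} y \<partial>lborel \<partial>lborel)"

lemma TP_En: "TP q u = ennreal (1 / q) * En"
  unfolding TP_def En_def Fr_def ..

lemma En_alt: "En = (\<integral>\<^sup>+ x. inner_int x * indicator {0..1} x \<partial>lborel)"
proof -
  have "(\<integral>\<^sup>+ y. ennreal (Fr x y) * indicator {0..1} x * indicator {0..1} y \<partial>lborel) = inner_int x * indicator {0..1} x" for x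
    by (cases "x \<in> {0..1}") (auto simp: inner_int_def)
  then show ?thesis unfolding En_def by simp
qed

lemma En_lower:
  assumes "0 \<le> w" "w \<le> 1" "\<And>x. x \<in> {p..p+w} \<Longrightarrow> K \<le> inner_int x"
  shows "K * ennreal w \<le> En"
  unfolding En_alt by (rule per_outer[of inner_int, OF inner_per assms])

definition lin :: "real \<Rightarrow> real \<Rightarrow> real \<Rightarrow> real" where
  "lin c x y = max 0 ((1 - q) * c powr q + q * c powr (q - 1) * norm (Sd x y))"

lemma lin_le_Fr: assumes "c > 0" "u y \<noteq> u x" shows "lin c x y \<le> Fr x y"
proof -
  have "(1 - q) * c powr q + q * c powr (q - 1) * norm (Sd x y) \<le> norm (Sd x y) powr q"
    by (rule tangent_powr) (use q2 assms in auto)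
  moreover have "0 \<le> Fr x y" unfolding Fr_def by simp
  ultimately show ?thesis unfolding lin_def Fr_eq[OF assms(2)] by simp
qed

lemma piece_bound:
  assumes ab: "\<alpha> \<le> \<beta>" and ne: "\<And>y. y \<in> {\<alpha>..\<beta>} \<Longrightarrow> u y \<noteq> u x" and c: "c > 0"
  shows "(lin c x has_integral integral {\<alpha>..\<beta>} (lin c x)) {\<alpha>..\<beta>}"
    and "(\<beta> - \<alpha>) * ((1 - q) * c powr q) + q * c powr (q - 1) * norm (sig x \<beta> - sig x \<alpha>) \<le> integral {\<alpha>..\<beta>} (lin c x)"
proof -
  have cS: "continuous_on {\<alpha>..\<beta>} (Sd x)" by (rule Sd_cont[OF ne])
  have li: "lin c x integrable_on {\<alpha>..\<beta>}"
    unfolding lin_def by (rule integrable_continuous_interval) (intro continuous_intros cS)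
  then show "(lin c x has_integral integral {\<alpha>..\<beta>} (lin c x)) {\<alpha>..\<beta>}" by blast
  have i1: "(\<lambda>y. norm (Sd x y)) integrable_on {\<alpha>..\<beta>}" and i2: "norm (sig x \<beta> - sig x \<alpha>) \<le> integral {\<alpha>..\<beta>} (\<lambda>y. norm (Sd x y))"
    using var_bound[OF ab ne] by auto
  have qc: "q * c powr (q - 1) \<ge> 0" using q2 by simp
  have hi: "((\<lambda>y. (1 - q) * c powr q + q * c powr (q - 1) * norm (Sd x y)) has_integral
       ((\<beta> - \<alpha>) * ((1 - q) * c powr q) + q * c powr (q - 1) * integral {\<alpha>..\<beta>} (\<lambda>y. norm (Sd x y)))) {\<alpha>..\<beta>}"
      using has_integral_add[OF has_integral_const_real[of "(1 - q) * c powr q" \<alpha> \<beta>] has_integral_mult_right[OF integrable_integral[OF i1], of "q * c powr (q - 1)"]] ab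
      by (simp add: mult.commute)
  have "integral {\<alpha>..\<beta>} (\<lambda>y. (1 - q) * c powr q + q * c powr (q - 1) * norm (Sd x y)) =
     (\<beta> - \<alpha>) * ((1 - q) * c powr q) + q * c powr (q - 1) * integral {\<alpha>..\<beta>} (\<lambda>y. norm (Sd x y))"
    using hi by (rule integral_unique)
  moreover have "integral {\<alpha>..\<beta>} (\<lambda>y. (1 - q) * c powr q + q * c powr (q - 1) * norm (Sd x y)) \<le> integral {\<alpha>..\<beta>} (lin c x)"
  proof (rule integral_le[OF _ li])
    show "(\<lambda>y. (1 - q) * c powr q + q * c powr (q - 1) * norm (Sd x y)) integrable_on {\<alpha>..\<beta>}"
      using hi by blast
  qed (auto simp: lin_def)
  moreover have "q * c powr (q - 1) * norm (sig x \<beta> - sig x \<alpha>) \<le> q * c powr (q - 1) * integral {\<alpha>..\<beta>} (\<lambda>y. norm (Sd x y))"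
    by (rule mult_left_mono[OF i2 qc])
  ultimately show "(\<beta> - \<alpha>) * ((1 - q) * c powr q) + q * c powr (q - 1) * norm (sig x \<beta> - sig x \<alpha>) \<le> integral {\<alpha>..\<beta>} (lin c x)"
    by linarith
qed

lemma powr_algebra: assumes "h > 0" "s > 0" shows "h * (s / h) powr q = h powr (1 - q) * s powr q"
  using assms by (simp add: powr_divide powr_diff)

lemma ext_inner:
  assumes ab: "\<alpha> < \<beta>" "\<beta> - \<alpha> < 1" and ne: "\<And>y. y \<in> {\<alpha>..\<beta>} \<Longrightarrow> u y \<noteq> u x"
    and s: "0 \<le> s" "s \<le> norm (sig x \<beta> - sig x \<alpha>)"
  shows "ennreal ((\<beta> - \<alpha>) powr (1 - q) * s powr q) \<le> inner_int x"
proof (cases "s = 0")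
  case True then show ?thesis by simp
next
  case False
  then have s0: "s > 0" using s by simp
  define h where "h = \<beta> - \<alpha>"
  have h0: "h > 0" using ab unfolding h_def by simp
  define c where "c = s / h"
  have c0: "c > 0" unfolding c_def using s0 h0 by simp
  note pb = piece_bound[of \<alpha> \<beta> x c, OF less_imp_le[OF ab(1)] ne c0]
  have "h * ((1 - q) * c powr q) + q * c powr (q - 1) * s \<le> integral {\<alpha>..\<beta>} (lin c x)"
  proof -
    have "q * c powr (q - 1) * s \<le> q * c powr (q - 1) * norm (sig x \<beta> - sig x \<alpha>)"
      by (rule mult_left_mono[OF s(2)]) (use q2 in simp)
    then show ?thesis using pb(2) unfolding h_def by linarith
  qed
  moreover have "q * c powr (q - 1) * s = q * h * c powr q"
  proof -
    have "c powr (q - 1) * c = c powr q" using c0 by (simp add: powr_diff)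
    moreover have "s = c * h" unfolding c_def using h0 by simp
    ultimately show ?thesis by (simp add: algebra_simps)
  qed
  moreover have "h * c powr q = h * ((1 - q) * c powr q) + q * h * c powr q" by (simp add: algebra_simps)
  ultimately have "h * c powr q \<le> integral {\<alpha>..\<beta>} (lin c x)" by linarith
  then have I: "h powr (1 - q) * s powr q \<le> integral {\<alpha>..\<beta>} (lin c x)"
    unfolding c_def using powr_algebra[OF h0 s0] by simp
  have lpos: "\<And>y. 0 \<le> lin c x y" by (simp add: lin_def)
  have lF: "\<And>y. y \<in> {\<alpha>..\<beta>} \<Longrightarrow> lin c x y \<le> Fr x y" using lin_le_Fr[OF c0] ne by blast
  have "ennreal (integral {\<alpha>..\<beta>} (lin c x)) \<le> inner_int x"
    unfolding inner_int_def
    by (rule per_lower[of "Fr x", OF Fr_per_y less_imp_le[OF ab(1)] ab(2) pb(1)]) (auto intro: lpos lF)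
  then show ?thesis using I unfolding h_def by (meson ennreal_leI order.trans)
qed

lemma sig_lim: "((\<lambda>e. sig x (x + e) + sig x (x - e)) \<longlongrightarrow> 0) (at_right 0)"
proof -
  define D where "D = dv u x"
  have D0: "D \<noteq> 0" using lbnd[of x] lam_pos unfolding D_def by auto
  define nr :: "'a \<Rightarrow> 'a" where "nr v = (1 / norm v) *\<^sub>R v" for v
  have Q1: "((\<lambda>h. (1/h) *\<^sub>R (u (x + h) - u x)) \<longlongrightarrow> D) (at 0)"
    using dq_tendsto[OF hvd] unfolding D_def .
  have d2: "((\<lambda>t. u (x - t)) has_vector_derivative - D) (at 0)"
  proof -
    have d1: "((\<lambda>t. x - t) has_vector_derivative (-1)) (at 0)"
      by (auto intro!: derivative_eq_intros simp: has_real_derivative_iff_has_vector_derivative[symmetric])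
    have "((u \<circ> (\<lambda>t. x - t)) has_vector_derivative ((-1) *\<^sub>R dv u (x - 0))) (at 0)"
      by (rule vector_diff_chain_at[OF d1]) (simp add: hvd)
    then show ?thesis unfolding D_def by (simp add: o_def)
  qed
  have Q2: "((\<lambda>h. (1/h) *\<^sub>R (u (x - h) - u x)) \<longlongrightarrow> - D) (at 0)"
    using dq_tendsto[OF d2] by simp
  have nrc: "((\<lambda>e. nr (f e)) \<longlongrightarrow> nr L) F" if "(f \<longlongrightarrow> L) F" "L \<noteq> 0" for f L and F :: "real filter"
    unfolding nr_def using that by (intro tendsto_intros) auto
  have le: "at_right (0::real) \<le> at 0" by (simp add: at_le)
  have "((\<lambda>e. nr ((1/e) *\<^sub>R (u (x + e) - u x)) + nr ((1/e) *\<^sub>R (u (x - e) - u x))) \<longlongrightarrow> nr D + nr (- D)) (at_right 0)"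
    by (intro tendsto_add nrc tendsto_mono[OF le Q1] tendsto_mono[OF le Q2]) (use D0 in auto)
  moreover have "nr D + nr (- D) = 0" unfolding nr_def by simp
  moreover have "\<forall>\<^sub>F e in at_right 0. nr ((1/e) *\<^sub>R (u (x + e) - u x)) + nr ((1/e) *\<^sub>R (u (x - e) - u x)) = sig x (x + e) + sig x (x - e)"
  proof (rule eventually_at_rightI[where b=1])
    fix e :: real assume "e \<in> {0<..<1}"
    then have e: "e > 0" by simp
    have "nr ((1/e) *\<^sub>R v) = (1 / norm v) *\<^sub>R v" for v
      unfolding nr_def using e by (cases "v = 0") (auto simp: field_simps)
    then show "nr ((1/e) *\<^sub>R (u (x + e) - u x)) + nr ((1/e) *\<^sub>R (u (x - e) - u x)) = sig x (x + e) + sig x (x - e)"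
      unfolding sig_def by simp
  qed simp
  ultimately show ?thesis using tendsto_cong by force
qed

end


lemma G1:
  fixes P Q X :: "'b::real_normed_vector"
  assumes "P \<noteq> X" "Q \<noteq> X"
  shows "norm (P - X) + norm (Q - X) \<le> norm (P - Q) +
    norm ((1 / norm (P - X)) *\<^sub>R (P - X) + (1 / norm (Q - X)) *\<^sub>R (Q - X)) * norm (P - X)"
proof -
  define a where "a = norm (P - X)"
  define b where "b = norm (Q - X)"
  define e1 where "e1 = (1 / a) *\<^sub>R (P - X)"
  define e2 where "e2 = (1 / b) *\<^sub>R (Q - X)"
  have a0: "a > 0" and b0: "b > 0" using assms unfolding a_def b_def by auto
  have P: "P - X = a *\<^sub>R e1" unfolding e1_def using a0 by simp
  have Q: "Q - X = b *\<^sub>R e2" unfolding e2_def using b0 by simp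
  have ne2: "norm e2 = 1" unfolding e2_def b_def using assms by simp
  have "Q - P = (a + b) *\<^sub>R e2 - a *\<^sub>R (e1 + e2)"
  proof -
    have "Q - P = (Q - X) - (P - X)" by simp
    also have "\<dots> = b *\<^sub>R e2 - a *\<^sub>R e1" using P Q by simp
    finally show ?thesis by (simp add: algebra_simps)
  qed
  then have "(a + b) *\<^sub>R e2 = (Q - P) + a *\<^sub>R (e1 + e2)" by (simp add: algebra_simps)
  then have "norm ((a + b) *\<^sub>R e2) \<le> norm (Q - P) + norm (a *\<^sub>R (e1 + e2))"
    by (metis norm_triangle_ineq)
  then have "a + b \<le> norm (P - Q) + a * norm (e1 + e2)"
    using ne2 a0 b0 by (simp add: norm_minus_commute)
  then show ?thesis unfolding a_def b_def e1_def e2_def by (simp add: mult.commute)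
qed

definition rho :: "real \<Rightarrow> real" where "rho q = (3/4) powr ((q - 2) / q)"
definition sz :: "real \<Rightarrow> real \<Rightarrow> real" where "sz q \<eta> = (1 - rho q) * \<eta> / 2"
definition eta :: "real \<Rightarrow> real \<Rightarrow> nat \<Rightarrow> real" where "eta q \<eta> k = \<eta> / 2 + \<eta> / 2 * rho q ^ k"
definition sk :: "real \<Rightarrow> real \<Rightarrow> nat \<Rightarrow> real" where "sk q \<eta> k = sz q \<eta> * rho q ^ k"
definition Cst :: "real \<Rightarrow> real \<Rightarrow> real" where "Cst q \<eta> = sz q \<eta> powr q / 2"

lemma rho_pos: "rho q > 0" unfolding rho_def by simp

lemma rho_lt1: assumes "q > 2" shows "rho q < 1"
proof -
  have "(3/4::real) powr ((q - 2) / q) < 1 powr ((q - 2) / q)"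
    by (rule powr_less_mono2) (use assms in auto)
  then show ?thesis unfolding rho_def by simp
qed

lemma sz_pos: assumes "q > 2" "\<eta> > 0" shows "sz q \<eta> > 0"
  unfolding sz_def using rho_lt1[OF assms(1)] assms by simp

lemma sk_pos: assumes "q > 2" "\<eta> > 0" shows "sk q \<eta> k > 0"
  unfolding sk_def using sz_pos[OF assms] rho_pos by simp

lemma eta_step: "eta q \<eta> k - eta q \<eta> (Suc k) = sk q \<eta> k"
  unfolding eta_def sk_def sz_def by (simp add: algebra_simps)

lemma eta0: "eta q \<eta> 0 = \<eta>" unfolding eta_def by simp

lemma eta_ge: assumes "\<eta> > 0" shows "\<eta> / 2 \<le> eta q \<eta> k"
  unfolding eta_def using rho_pos[of q] assms by simp

lemma Cst_pos: assumes "q > 2" "\<eta> > 0" shows "Cst q \<eta> > 0"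
  unfolding Cst_def using sz_pos[OF assms] by simp

lemma sk_identity: assumes "q > 2"
  shows "sk q \<eta> k powr q * ((3/4::real)^k) powr (2 - q) = sz q \<eta> powr q"
proof -
  have r: "rho q ^ k = (3/4) powr ((q - 2) / q * real k)"
    unfolding rho_def by (simp add: powr_realpow[symmetric] powr_powr)
  have qq: "(q - 2) / q * real k * q = (q - 2) * real k" using assms by (simp add: field_simps)
  have "(rho q ^ k) powr q = (3/4) powr ((q - 2) * real k)"
    unfolding r powr_powr qq ..
  moreover have "((3/4::real)^k) powr (2 - q) = (3/4) powr (real k * (2 - q))"
    by (simp add: powr_realpow[symmetric] powr_powr)
  moreover have "sk q \<eta> k powr q = sz q \<eta> powr q * (rho q ^ k) powr q"
    unfolding sk_def by (simp add: powr_mult)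
  ultimately have "sk q \<eta> k powr q * ((3/4::real)^k) powr (2 - q) = sz q \<eta> powr q * ((3/4) powr ((q - 2) * real k) * (3/4) powr (real k * (2 - q)))"
    by simp
  also have "(3/4::real) powr ((q - 2) * real k) * (3/4) powr (real k * (2 - q)) = 1"
    by (simp add: powr_add[symmetric] algebra_simps)
  finally show ?thesis by simp
qed

context curve begin

lemma Fr_nonneg: "0 \<le> Fr x y" unfolding Fr_def by simp

lemma int_inner:
  assumes ax: "\<alpha> < x" "x < \<beta>" "\<beta> - \<alpha> < 1" and s: "0 < s" "s < norm (sig x \<alpha> + sig x \<beta>)"
  shows "ennreal ((\<beta> - \<alpha>) powr (1 - q) * s powr q) \<le> inner_int x"
proof -
  define h where "h = \<beta> - \<alpha>"
  have h0: "h > 0" using ax unfolding h_def by simp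
  define c where "c = s / h"
  have c0: "c > 0" unfolding c_def using s h0 by simp
  define m where "m = min (x - \<alpha>) (\<beta> - x)"
  have m0: "m > 0" unfolding m_def using ax by simp
  have "((\<lambda>e. norm (sig x (x + e) + sig x (x - e))) \<longlongrightarrow> 0) (at_right 0)"
    using tendsto_norm_zero[OF sig_lim] .
  then have "\<forall>\<^sub>F e in at_right 0. norm (sig x (x + e) + sig x (x - e)) < norm (sig x \<alpha> + sig x \<beta>) - s"
    by (rule order_tendstoD(2)) (use s in simp)
  then obtain e where e: "0 < e" "e < m" "norm (sig x (x + e) + sig x (x - e)) < norm (sig x \<alpha> + sig x \<beta>) - s"
    using eventually_at_right_exists[OF _ m0] by blast
  define a1 where "a1 = x - e"
  define b1 where "b1 = x + e"
  have ord: "\<alpha> < a1" "a1 < x" "x < b1" "b1 < \<beta>" using e ax unfolding a1_def b1_def m_def by auto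
  have ne1: "u y \<noteq> u x" if "y \<in> {\<alpha>..a1}" for y
    by (rule u_neq) (use that ord ax in auto)
  have ne2: "u y \<noteq> u x" if "y \<in> {b1..\<beta>}" for y
    by (rule u_neq) (use that ord ax in auto)
  note pb1 = piece_bound[of \<alpha> a1 x c, OF _ ne1 c0]
  note pb2 = piece_bound[of b1 \<beta> x c, OF _ ne2 c0]
  define I1 where "I1 = integral {\<alpha>..a1} (lin c x)"
  define I2 where "I2 = integral {b1..\<beta>} (lin c x)"
  define g where "g y = (if y \<in> {\<alpha>..a1} \<union> {b1..\<beta>} then lin c x y else 0)" for y
  have g1: "(g has_integral I1) {\<alpha>..a1}"
    by (rule has_integral_spike_finite[where S="{}" and f="lin c x"]) (use pb1(1) ord in \<open>auto simp: g_def I1_def\<close>)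
  have g2: "(g has_integral 0) {a1..b1}"
    by (rule has_integral_spike_finite[where S="{a1, b1}" and f="\<lambda>_. 0"]) (use ord in \<open>auto simp: g_def\<close>)
  have g3: "(g has_integral I2) {b1..\<beta>}"
    by (rule has_integral_spike_finite[where S="{}" and f="lin c x"]) (use pb2(1) ord in \<open>auto simp: g_def I2_def\<close>)
  have g12: "(g has_integral (I1 + 0)) {\<alpha>..b1}" by (rule has_integral_combine[OF _ _ g1 g2]) (use ord in auto)
  have gI: "(g has_integral (I1 + 0 + I2)) {\<alpha>..\<beta>}" by (rule has_integral_combine[OF _ _ g12 g3]) (use ord in auto)
  define K where "K = (1 - q) * c powr q"
  define B where "B = q * c powr (q - 1)"
  define A1 where "A1 = norm (sig x a1 - sig x \<alpha>)"
  define A2 where "A2 = norm (sig x \<beta> - sig x b1)"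
  have K0: "K \<le> 0" unfolding K_def using q2 by (simp add: mult_nonpos_nonneg)
  have B0: "B \<ge> 0" unfolding B_def using q2 by simp
  have P1: "(a1 - \<alpha>) * K + B * A1 \<le> I1" using pb1(2) ord unfolding K_def B_def A1_def I1_def by simp
  have P2: "(\<beta> - b1) * K + B * A2 \<le> I2" using pb2(2) ord unfolding K_def B_def A2_def I2_def by simp
  have tri: "norm (sig x \<alpha> + sig x \<beta>) \<le> A1 + A2 + norm (sig x (x + e) + sig x (x - e))"
  proof -
    have "sig x \<alpha> + sig x \<beta> = - (sig x a1 - sig x \<alpha>) + (sig x \<beta> - sig x b1) + (sig x (x + e) + sig x (x - e))"
      unfolding a1_def b1_def by (simp add: algebra_simps)
    then have "norm (sig x \<alpha> + sig x \<beta>) = norm (- (sig x a1 - sig x \<alpha>) + (sig x \<beta> - sig x b1) + (sig x (x + e) + sig x (x - e)))"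
      by (rule arg_cong)
    then have "norm (sig x \<alpha> + sig x \<beta>) \<le> norm (- (sig x a1 - sig x \<alpha>)) + norm (sig x \<beta> - sig x b1) + norm (sig x (x + e) + sig x (x - e))"
      using norm_triangle_ineq[of "- (sig x a1 - sig x \<alpha>) + (sig x \<beta> - sig x b1)" "sig x (x + e) + sig x (x - e)"]
        norm_triangle_ineq[of "- (sig x a1 - sig x \<alpha>)" "sig x \<beta> - sig x b1"] by linarith
    then show ?thesis unfolding A1_def A2_def by (simp add: norm_minus_commute)
  qed
  have As: "s \<le> A1 + A2" using tri e(3) by linarith
  have "B * s \<le> B * (A1 + A2)" by (rule mult_left_mono[OF As B0])
  then have BA: "B * s \<le> B * A1 + B * A2" by (simp add: algebra_simps)
  have KK: "(a1 - \<alpha>) * K + (\<beta> - b1) * K = h * K - 2 * e * K" unfolding a1_def b1_def h_def by (simp add: algebra_simps)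
  have eK: "0 \<le> - (2 * e * K)" using e(1) K0 by (simp add: mult_nonneg_nonpos)
  have Bs: "B * s = q * h * c powr q"
  proof -
    have "c powr (q - 1) * c = c powr q" using c0 by (simp add: powr_diff)
    moreover have "s = c * h" unfolding c_def using h0 by simp
    ultimately show ?thesis unfolding B_def by (simp add: algebra_simps)
  qed
  have hK: "h * K + q * h * c powr q = h * c powr q" unfolding K_def by (simp add: algebra_simps)
  have main: "h * c powr q \<le> I1 + 0 + I2" using P1 P2 BA KK eK Bs hK by linarith
  have "h * c powr q = h powr (1 - q) * s powr q"
    unfolding c_def using powr_algebra[OF h0 s(1)] by simp
  then have main': "(\<beta> - \<alpha>) powr (1 - q) * s powr q \<le> I1 + 0 + I2" using main unfolding h_def by simp
  have gpos: "0 \<le> g y" for y unfolding g_def lin_def by simp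
  have gle: "g y \<le> Fr x y" if "y \<in> {\<alpha>..\<beta>}" for y
  proof (cases "y \<in> {\<alpha>..a1} \<union> {b1..\<beta>}")
    case True
    then have "u y \<noteq> u x" using ne1 ne2 by blast
    then show ?thesis using True lin_le_Fr[OF c0] unfolding g_def by simp
  next
    case False then show ?thesis using Fr_nonneg[of x y] by (auto simp: g_def)
  qed
  have "ennreal (I1 + 0 + I2) \<le> inner_int x"
    unfolding inner_int_def
    by (rule per_lower[of "Fr x", OF Fr_per_y _ _ gI]) (use ord ax gpos gle in auto)
  then show ?thesis using main' by (meson ennreal_leI order.trans)
qed

lemma K_int:
  assumes ab: "\<alpha> < \<beta>" "\<beta> - \<alpha> \<le> 1/2" and s: "0 < s"
    and A: "\<And>x. x \<in> {\<alpha> + (\<beta> - \<alpha>)/4 .. \<beta> - (\<beta> - \<alpha>)/4} \<Longrightarrow> s < norm (sig x \<alpha> + sig x \<beta>)"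
  shows "ennreal ((\<beta> - \<alpha>) powr (1 - q) * s powr q * ((\<beta> - \<alpha>) / 2)) \<le> En"
proof -
  have "ennreal ((\<beta> - \<alpha>) powr (1 - q) * s powr q) * ennreal ((\<beta> - \<alpha>) / 2) \<le> En"
  proof (rule En_lower[where p="\<alpha> + (\<beta> - \<alpha>)/4"])
    fix x assume x: "x \<in> {\<alpha> + (\<beta> - \<alpha>) / 4..\<alpha> + (\<beta> - \<alpha>) / 4 + (\<beta> - \<alpha>) / 2}"
    show "ennreal ((\<beta> - \<alpha>) powr (1 - q) * s powr q) \<le> inner_int x"
    proof (rule int_inner)
      have xm: "x \<in> {\<alpha> + (\<beta> - \<alpha>)/4 .. \<beta> - (\<beta> - \<alpha>)/4}" using x by (auto simp: field_simps)
      then show "s < norm (sig x \<alpha> + sig x \<beta>)" by (rule A)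
      show "\<alpha> < x" "x < \<beta>" using xm ab by (auto simp: field_simps)
    qed (use ab s in auto)
  qed (use ab in auto)
  then show ?thesis by (simp add: ennreal_mult'[symmetric])
qed

end


context curve begin

lemma L_nonneg: assumes "a \<le> b" shows "0 \<le> L a b"
  using L_lower[OF assms] lam_pos assms by (smt (verit) mult_nonneg_nonneg)

lemma desc_step:
  assumes \<eta>: "0 < \<eta>" "\<eta> \<le> 1/2" and h: "h \<le> 1/2" "0 < h"
    and ab: "a < b" "b - a \<le> (3/4)^k * h" and df: "norm (u b - u a) \<le> (1 - eta q \<eta> k) * L a b"
    and En: "En < ennreal (Cst q \<eta> * h powr (2 - q))"
  shows "\<exists>a' b'. a \<le> a' \<and> a' < b' \<and> b' \<le> b \<and> b' - a' \<le> (3/4)^(Suc k) * h \<and>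
           norm (u b' - u a') \<le> (1 - eta q \<eta> (Suc k)) * L a' b'"
proof -
  define h' where "h' = b - a"
  have h'0: "h' > 0" unfolding h'_def using ab by simp
  have pk: "(3/4::real)^k \<le> 1" by (rule power_le_one) auto
  have pk0: "(3/4::real)^k > 0" by simp
  have h'le: "h' \<le> (3/4)^k * h" unfolding h'_def using ab by simp
  have h'12: "h' \<le> 1/2" using h'le pk h mult_right_mono[OF pk, of h] by linarith
  define S where "S = sk q \<eta> k"
  have S0: "S > 0" unfolding S_def using sk_pos q2 \<eta> by simp
  have "\<exists>Z \<in> {a + h'/4 .. b - h'/4}. norm (sig Z a + sig Z b) \<le> S"
  proof (rule ccontr)
    assume "\<not> ?thesis"
    then have A: "\<And>x. x \<in> {a + (b - a)/4 .. b - (b - a)/4} \<Longrightarrow> S < norm (sig x a + sig x b)"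
      unfolding h'_def by force
    have K: "ennreal (h' powr (1 - q) * S powr q * (h' / 2)) \<le> En"
      unfolding h'_def by (rule K_int[OF ab(1) _ S0 A]) (use h'12 h'_def in auto)
    have e1: "h' powr (1 - q) * S powr q * (h' / 2) = S powr q * h' powr (2 - q) / 2"
    proof -
      have "h' powr (2 - q) = h' powr (1 - q) * h' powr 1" using powr_add[of h' "1 - q" 1] by simp
      then have "h' powr (1 - q) * h' = h' powr (2 - q)" using h'0 by simp
      then show ?thesis by (simp add: algebra_simps)
    qed
    have e2: "((3/4)^k * h) powr (2 - q) \<le> h' powr (2 - q)"
      by (rule powr_mono2'[OF _ h'0 h'le]) (use q2 in simp)
    have e3: "((3/4::real)^k * h) powr (2 - q) = ((3/4)^k) powr (2 - q) * h powr (2 - q)"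
      by (rule powr_mult)
    have e4: "S powr q * ((3/4::real)^k) powr (2 - q) = sz q \<eta> powr q"
      unfolding S_def by (rule sk_identity[OF q2])
    have "Cst q \<eta> * h powr (2 - q) = S powr q * (((3/4)^k * h) powr (2 - q)) / 2"
      unfolding e3 Cst_def using e4 by (simp add: algebra_simps)
    also have "\<dots> \<le> S powr q * h' powr (2 - q) / 2"
      using mult_left_mono[OF e2, of "S powr q"] by simp
    finally have X: "Cst q \<eta> * h powr (2 - q) \<le> S powr q * h' powr (2 - q) / 2" .
    have "Cst q \<eta> * h powr (2 - q) \<le> h' powr (1 - q) * S powr q * (h' / 2)" unfolding e1 by (rule X)
    then have "ennreal (Cst q \<eta> * h powr (2 - q)) \<le> En" using K by (meson ennreal_leI order.trans)
    then show False using En by simp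
  qed
  then obtain Z where Z: "Z \<in> {a + h'/4 .. b - h'/4}" "norm (sig Z a + sig Z b) \<le> S" by blast
  have aZ: "a < Z" "Z < b" using Z(1) h'0 unfolding h'_def by (auto simp: field_simps)
  have uZa: "u a \<noteq> u Z" by (rule u_neq) (use aZ h'12 h'_def in auto)
  have uZb: "u b \<noteq> u Z" by (rule u_neq) (use aZ h'12 h'_def in auto)
  have G: "norm (u a - u Z) + norm (u b - u Z) \<le> norm (u a - u b) + norm (sig Z a + sig Z b) * norm (u a - u Z)"
    using G1[OF uZa uZb] unfolding sig_def .
  define n1 where "n1 = norm (u Z - u a)"
  define n2 where "n2 = norm (u b - u Z)"
  have G': "n1 + n2 \<le> norm (u b - u a) + norm (sig Z a + sig Z b) * n1"
    using G unfolding n1_def n2_def by (simp add: norm_minus_commute)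
  have n1L: "n1 \<le> L a b"
  proof -
    have "n1 \<le> L a Z" unfolding n1_def by (rule chord_le_L) (use aZ in simp)
    moreover have "L a Z + L Z b = L a b" by (rule L_add) (use aZ in auto)
    moreover have "0 \<le> L Z b" by (rule L_nonneg) (use aZ in simp)
    ultimately show ?thesis by linarith
  qed
  have "norm (sig Z a + sig Z b) * n1 \<le> S * L a b"
    by (rule mult_mono[OF Z(2) n1L]) (use S0 n1_def in auto)
  then have sum: "n1 + n2 \<le> (1 - eta q \<eta> (Suc k)) * L a b"
    using G' df eta_step[of q \<eta> k] unfolding S_def by (simp add: algebra_simps)
  have Lsplit: "L a b = L a Z + L Z b" using L_add[of a Z b] aZ by simp
  have l1: "Z - a \<le> 3/4 * (b - a)" "b - Z \<le> 3/4 * (b - a)" using Z(1) unfolding h'_def by (auto simp: field_simps)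
  have l2: "3/4 * (b - a) \<le> (3/4)^(Suc k) * h" using h'le unfolding h'_def by simp
  have len1: "Z - a \<le> (3/4)^(Suc k) * h" and len2: "b - Z \<le> (3/4)^(Suc k) * h"
    using l1 l2 by linarith+
  show ?thesis
  proof (cases "n1 \<le> (1 - eta q \<eta> (Suc k)) * L a Z")
    case True
    then show ?thesis using aZ len1 unfolding n1_def by (intro exI[of _ a] exI[of _ Z]) auto
  next
    case False
    have "n2 \<le> (1 - eta q \<eta> (Suc k)) * L Z b"
      using False sum unfolding Lsplit by (simp add: algebra_simps)
    then show ?thesis using aZ len2 unfolding n2_def by (intro exI[of _ Z] exI[of _ b]) auto
  qed
qed

lemma LL:
  assumes \<eta>: "0 < \<eta>" "\<eta> \<le> 1/2" and ab: "\<alpha> < \<beta>" "\<beta> - \<alpha> \<le> 1/2"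
    and df: "norm (u \<beta> - u \<alpha>) \<le> (1 - \<eta>) * L \<alpha> \<beta>"
  shows "ennreal (Cst q \<eta> * (\<beta> - \<alpha>) powr (2 - q)) \<le> En"
proof (rule ccontr)
  assume "\<not> ?thesis"
  then have En: "En < ennreal (Cst q \<eta> * (\<beta> - \<alpha>) powr (2 - q))" by (simp add: not_le)
  define h where "h = \<beta> - \<alpha>"
  have h0: "h > 0" "h \<le> 1/2" using ab unfolding h_def by auto
  have all: "\<exists>a b. \<alpha> \<le> a \<and> a < b \<and> b \<le> \<beta> \<and> b - a \<le> (3/4)^k * h \<and> norm (u b - u a) \<le> (1 - eta q \<eta> k) * L a b" for k
  proof (induction k)
    case 0
    show ?case using ab df unfolding h_def eta0 by (intro exI[of _ \<alpha>] exI[of _ \<beta>]) auto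
  next
    case (Suc k)
    then obtain a b where ab': "\<alpha> \<le> a" "a < b" "b \<le> \<beta>" "b - a \<le> (3/4)^k * h" "norm (u b - u a) \<le> (1 - eta q \<eta> k) * L a b"
      by blast
    obtain a' b' where "a \<le> a'" "a' < b'" "b' \<le> b" "b' - a' \<le> (3/4)^(Suc k) * h" "norm (u b' - u a') \<le> (1 - eta q \<eta> (Suc k)) * L a' b'"
      using desc_step[OF \<eta> h0(2) h0(1) ab'(2) ab'(4) ab'(5)] En unfolding h_def by blast
    then show ?case using ab' by (intro exI[of _ a'] exI[of _ b']) auto
  qed
  define eps where "eps = lam * \<eta> / 8"
  have eps0: "eps > 0" unfolding eps_def using lam_pos \<eta> by simp
  obtain d where d: "d > 0" and dd: "\<And>a b. a \<le> b \<Longrightarrow> b - a \<le> d \<Longrightarrow>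
      norm (u b - u a - (b - a) *\<^sub>R dv u a) \<le> eps * (b - a) \<and> L a b \<le> (norm (dv u a) + eps) * (b - a)"
    using lin_approx[OF eps0] by blast
  obtain k where k: "(3/4::real)^k < d / h" using real_arch_pow_inv[of "d / h" "3/4"] d h0 by auto
  obtain a b where ab2: "a < b" "b - a \<le> (3/4)^k * h" "norm (u b - u a) \<le> (1 - eta q \<eta> k) * L a b"
    using all[of k] by blast
  have "(3/4)^k * h < d" using k h0 by (simp add: field_simps)
  then have bad: "b - a \<le> d" using ab2 by linarith
  define t where "t = b - a"
  have t0: "t > 0" unfolding t_def using ab2 by simp
  define N where "N = norm (dv u a)"
  have N: "N \<ge> lam" unfolding N_def by (rule lbnd)
  have c1: "(N - eps) * t \<le> norm (u b - u a)"
  proof -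
    have tri: "norm (t *\<^sub>R dv u a) \<le> norm (u b - u a) + norm (u b - u a - t *\<^sub>R dv u a)"
      by (metis norm_triangle_sub add.commute norm_minus_commute)
    have nt: "norm (t *\<^sub>R dv u a) = t * N" using t0 by (simp add: N_def)
    have dd': "norm (u b - u a - t *\<^sub>R dv u a) \<le> eps * t" using dd[of a b] ab2 bad unfolding t_def by simp
    have "(N - eps) * t = t * N - eps * t" by (simp add: algebra_simps)
    then show ?thesis using tri nt dd' by linarith
  qed
  have c3: "L a b \<le> (N + eps) * t" using dd[of a b] ab2 bad unfolding t_def N_def by simp
  have e1: "\<eta> / 2 \<le> eta q \<eta> k" by (rule eta_ge[OF \<eta>(1)])
  have e2: "eta q \<eta> k \<le> \<eta>"
  proof -
    have "rho q ^ k \<le> 1" using rho_pos[of q] rho_lt1[OF q2] by (simp add: power_le_one)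
    then have "\<eta> / 2 * rho q ^ k \<le> \<eta> / 2" using \<eta> by (simp add: mult_left_le)
    then show ?thesis unfolding eta_def by simp
  qed
  have c2: "norm (u b - u a) \<le> (1 - \<eta> / 2) * ((N + eps) * t)"
  proof -
    have "(1 - eta q \<eta> k) * L a b \<le> (1 - \<eta> / 2) * ((N + eps) * t)"
      by (rule mult_mono) (use e1 e2 \<eta> c3 L_nonneg[of a b] ab2 in auto)
    then show ?thesis using ab2 by linarith
  qed
  have "(N - eps) * t \<le> (1 - \<eta> / 2) * (N + eps) * t" using c1 c2 by (simp add: algebra_simps)
  then have "N - eps \<le> (1 - \<eta> / 2) * (N + eps)" using t0 by simp
  moreover have "(\<eta> / 2) * lam \<le> (\<eta> / 2) * (N + eps)" using N eps0 \<eta> by (intro mult_left_mono) auto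
  ultimately have "\<eta> / 2 * lam \<le> 2 * eps" by (simp add: algebra_simps)
  then show False unfolding eps_def using lam_pos \<eta> by (simp add: field_simps)
qed

lemma chord_good:
  assumes \<eta>: "0 < \<eta>" "\<eta> \<le> 1/2" and h0: "0 < h0" "h0 \<le> 1/2"
    and En: "En < ennreal (Cst q \<eta> * h0 powr (2 - q))"
    and ab: "\<alpha> < \<beta>" "\<beta> - \<alpha> \<le> h0"
  shows "(1 - \<eta>) * L \<alpha> \<beta> < norm (u \<beta> - u \<alpha>)"
proof (rule ccontr)
  assume "\<not> ?thesis"
  then have df': "norm (u \<beta> - u \<alpha>) \<le> (1 - \<eta>) * L \<alpha> \<beta>" by simp
  have ab12: "\<beta> - \<alpha> \<le> 1/2" using ab h0 by simp
  have L1: "ennreal (Cst q \<eta> * (\<beta> - \<alpha>) powr (2 - q)) \<le> En"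
    by (rule LL[OF \<eta> ab(1) ab12 df'])
  have "h0 powr (2 - q) \<le> (\<beta> - \<alpha>) powr (2 - q)"
    by (rule powr_mono2') (use q2 ab in auto)
  then have "Cst q \<eta> * h0 powr (2 - q) \<le> Cst q \<eta> * (\<beta> - \<alpha>) powr (2 - q)"
    using Cst_pos[OF q2 \<eta>(1)] by simp
  then have "ennreal (Cst q \<eta> * h0 powr (2 - q)) \<le> En" using L1 by (meson ennreal_leI order.trans)
  then show False using En by simp
qed

end


lemma unit_diff:
  fixes v w :: "'b::real_normed_vector"
  assumes "v \<noteq> 0"
  shows "norm ((1 / norm v) *\<^sub>R v - (1 / norm w) *\<^sub>R w) \<le> 2 * norm (v - w) / norm v"
proof (cases "w = 0")
  case True
  then show ?thesis using assms by simp
next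
  case False
  have nv: "norm v > 0" using assms by simp
  have nw: "norm w > 0" using False by simp
  have "(1 / norm v) *\<^sub>R v - (1 / norm w) *\<^sub>R w = (1 / norm v) *\<^sub>R (v - w) + (1 / norm v - 1 / norm w) *\<^sub>R w"
    by (simp add: algebra_simps)
  then have "norm ((1 / norm v) *\<^sub>R v - (1 / norm w) *\<^sub>R w) \<le> norm ((1 / norm v) *\<^sub>R (v - w)) + norm ((1 / norm v - 1 / norm w) *\<^sub>R w)"
    by (metis norm_triangle_ineq)
  also have "norm ((1 / norm v) *\<^sub>R (v - w)) = norm (v - w) / norm v" by simp
  also have "norm ((1 / norm v - 1 / norm w) *\<^sub>R w) = \<bar>norm w - norm v\<bar> / norm v"
  proof -
    have "\<bar>1 / norm v - 1 / norm w\<bar> * norm w = \<bar>(norm w - norm v) / (norm v * norm w)\<bar> * norm w"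
      using nv nw by (simp add: field_simps)
    also have "\<dots> = \<bar>norm w - norm v\<bar> / norm v" using nv nw by (simp add: abs_divide abs_mult field_simps)
    finally show ?thesis by simp
  qed
  also have "\<bar>norm w - norm v\<bar> \<le> norm (v - w)" by (metis norm_triangle_ineq3 norm_minus_commute)
  then have "\<bar>norm w - norm v\<bar> / norm v \<le> norm (v - w) / norm v" using nv by (simp add: divide_right_mono)
  ultimately show ?thesis by simp
qed

lemma G2:
  fixes v1 v2 :: "'b::real_inner"
  assumes r: "v1 \<noteq> 0" "v2 \<noteq> 0" and e: "0 \<le> \<eta>" "\<eta> \<le> 1"
    and ch: "(1 - \<eta>) * (norm v1 + norm v2) \<le> norm (v1 - v2)"
  shows "(norm ((1 / norm v1) *\<^sub>R v1 + (1 / norm v2) *\<^sub>R v2))^2 \<le> 2 * \<eta> * (norm v1 + norm v2)^2 / (norm v1 * norm v2)"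
proof -
  define r1 where "r1 = norm v1"
  define r2 where "r2 = norm v2"
  have r0: "r1 > 0" "r2 > 0" using r unfolding r1_def r2_def by auto
  define p where "p = v1 \<bullet> v2"
  have n1: "(norm ((1 / r1) *\<^sub>R v1 + (1 / r2) *\<^sub>R v2))^2 = 2 + 2 * p / (r1 * r2)"
  proof -
    have "(norm ((1 / r1) *\<^sub>R v1 + (1 / r2) *\<^sub>R v2))^2 = ((1 / r1) *\<^sub>R v1 + (1 / r2) *\<^sub>R v2) \<bullet> ((1 / r1) *\<^sub>R v1 + (1 / r2) *\<^sub>R v2)"
      by (simp add: power2_norm_eq_inner)
    also have "\<dots> = (v1 \<bullet> v1) / r1^2 + (v2 \<bullet> v2) / r2^2 + 2 * p / (r1 * r2)"
      unfolding p_def by (simp add: inner_add_left inner_add_right inner_commute power2_eq_square field_simps)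
    also have "v1 \<bullet> v1 = r1^2" unfolding r1_def by (simp add: power2_norm_eq_inner)
    also have "v2 \<bullet> v2 = r2^2" unfolding r2_def by (simp add: power2_norm_eq_inner)
    finally show ?thesis using r0 by simp
  qed
  have n2: "(norm (v1 - v2))^2 = r1^2 + r2^2 - 2 * p"
    unfolding r1_def r2_def p_def by (simp add: power2_norm_eq_inner inner_diff_left inner_diff_right inner_commute)
  have "((1 - \<eta>) * (r1 + r2))^2 \<le> (norm (v1 - v2))^2"
    by (rule power_mono) (use ch e r0 r1_def r2_def in auto)
  then have "2 * p \<le> r1^2 + r2^2 - ((1 - \<eta>) * (r1 + r2))^2" using n2 by linarith
  then have "2 * p / (r1 * r2) \<le> (r1^2 + r2^2 - ((1 - \<eta>) * (r1 + r2))^2) / (r1 * r2)"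
    using r0 by (simp add: divide_right_mono)
  moreover have "2 + (r1^2 + r2^2 - ((1 - \<eta>) * (r1 + r2))^2) / (r1 * r2) = ((r1 + r2)^2 - ((1 - \<eta>) * (r1 + r2))^2) / (r1 * r2)"
    using r0 by (simp add: field_simps power2_eq_square)
  ultimately have "2 + 2 * p / (r1 * r2) \<le> ((r1 + r2)^2 - ((1 - \<eta>) * (r1 + r2))^2) / (r1 * r2)"
    by linarith
  also have "((r1 + r2)^2 - ((1 - \<eta>) * (r1 + r2))^2) = (2 * \<eta> - \<eta>^2) * (r1 + r2)^2"
    by (simp add: power2_eq_square algebra_simps)
  also have "(2 * \<eta> - \<eta>^2) * (r1 + r2)^2 / (r1 * r2) \<le> 2 * \<eta> * (r1 + r2)^2 / (r1 * r2)"
    using r0 by (intro divide_right_mono mult_right_mono) auto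
  finally show ?thesis using n1 unfolding r1_def r2_def by simp
qed


context curve begin

lemma ext_energy:
  assumes \<eta>: "0 < \<eta>0" "\<eta>0 \<le> 1/2" "\<eta>0 * (128 * Lam^2) \<le> lam^2"
    and h0: "0 < h0" "h0 \<le> 1/2" and En: "En < ennreal (Cst q \<eta>0 * h0 powr (2 - q))"
    and ab: "a < b" "h0 < b - a" "b - a \<le> 1/2"
    and \<delta>: "\<delta> = norm (u b - u a)" "0 < \<delta>" "130 * \<delta> \<le> lam * h0" "130 * \<delta> \<le> Lam * h0"
  shows "ennreal ((2 / Lam) * (128 / lam) powr (1 - q) * \<delta> powr (2 - q)) \<le> En"
proof -
  define \<tau> where "\<tau> = \<delta> / Lam"
  define t where "t = 64 * \<delta> / lam"
  have \<tau>0: "\<tau> > 0" unfolding \<tau>_def using \<delta> Lam_pos by simp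
  have t0: "t > 0" unfolding t_def using \<delta> lam_pos by simp
  have dl: "\<delta> / lam \<le> h0 / 130" using \<delta>(3) lam_pos by (simp add: field_simps)
  have dL: "\<delta> / Lam \<le> h0 / 130" using \<delta>(4) Lam_pos by (simp add: field_simps)
  have t2: "2 * t \<le> h0" unfolding t_def using dl h0 by (simp add: field_simps)
  have t64: "t = 64 * (\<delta> / lam)" unfolding t_def by simp
  have tt: "t + \<tau> < h0" unfolding t64 \<tau>_def using dl dL h0 by linarith
  have lt: "lam * t = 64 * \<delta>" unfolding t_def using lam_pos by simp
  note cg = chord_good[OF \<eta>(1,2) h0 En]
  define Q where "Q = u b"
  define v1 where "v1 = u (b - t) - Q"
  define v2 where "v2 = u (b + t) - Q"
  define r1 where "r1 = norm v1"
  define r2 where "r2 = norm v2"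
  have L1: "(1 - \<eta>0) * L (b - t) b < norm (u b - u (b - t))" by (rule cg) (use t0 t2 in auto)
  have L2: "(1 - \<eta>0) * L b (b + t) < norm (u (b + t) - u b)" by (rule cg) (use t0 t2 in auto)
  have L3: "(1 - \<eta>0) * L (b - t) (b + t) < norm (u (b + t) - u (b - t))" by (rule cg) (use t0 t2 in auto)
  have r1e: "r1 = norm (u b - u (b - t))" unfolding r1_def v1_def Q_def by (simp add: norm_minus_commute)
  have r2e: "r2 = norm (u (b + t) - u b)" unfolding r2_def v2_def Q_def by simp
  have et: "1/2 \<le> 1 - \<eta>0" using \<eta> by simp
  have r1lo: "lam * t / 2 \<le> r1"
  proof -
    have "1/2 * (lam * t) \<le> (1 - \<eta>0) * L (b - t) b"
      by (rule mult_mono[OF et]) (use L_lower[of "b - t" b] t0 \<eta> lam_pos in auto)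
    then show ?thesis using L1 r1e by simp
  qed
  have r2lo: "lam * t / 2 \<le> r2"
  proof -
    have "1/2 * (lam * t) \<le> (1 - \<eta>0) * L b (b + t)"
      by (rule mult_mono[OF et]) (use L_lower[of b "b + t"] t0 \<eta> lam_pos in auto)
    then show ?thesis using L2 r2e by simp
  qed
  have r1hi: "r1 \<le> Lam * t" using chord_Lam[of "b - t" b] t0 r1e by simp
  have r2hi: "r2 \<le> Lam * t" using chord_Lam[of b "b + t"] t0 r2e by simp
  have lt0: "lam * t / 2 > 0" using lam_pos t0 by simp
  have r10: "r1 > 0" using r1lo lt0 by linarith
  have r20: "r2 > 0" using r2lo lt0 by linarith
  have ch: "(1 - \<eta>0) * (norm v1 + norm v2) \<le> norm (v1 - v2)"
  proof -
    have "r1 \<le> L (b - t) b" using chord_le_L[of "b - t" b] t0 r1e by simp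
    moreover have "r2 \<le> L b (b + t)" using chord_le_L[of b "b + t"] t0 r2e by simp
    moreover have "L (b - t) b + L b (b + t) = L (b - t) (b + t)" by (rule L_add) (use t0 in auto)
    ultimately have "r1 + r2 \<le> L (b - t) (b + t)" by linarith
    then have "(1 - \<eta>0) * (r1 + r2) \<le> (1 - \<eta>0) * L (b - t) (b + t)"
      by (rule mult_left_mono) (use \<eta> in simp)
    moreover have "norm (v1 - v2) = norm (u (b + t) - u (b - t))"
      unfolding v1_def v2_def by (simp add: norm_minus_commute)
    ultimately show ?thesis using L3 unfolding r1_def r2_def by linarith
  qed
  define f1 where "f1 = (1 / norm v1) *\<^sub>R v1"
  define f2 where "f2 = (1 / norm v2) *\<^sub>R v2"
  have v10: "v1 \<noteq> 0" using r10 r1_def by auto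
  have v20: "v2 \<noteq> 0" using r20 r2_def by auto
  have g2: "(norm (f1 + f2))^2 \<le> 2 * \<eta>0 * (r1 + r2)^2 / (r1 * r2)"
    using G2[OF v10 v20 _ _ ch] \<eta> unfolding f1_def f2_def r1_def r2_def by simp
  have "2 * \<eta>0 * (r1 + r2)^2 / (r1 * r2) \<le> 1/4"
  proof -
    have s1: "(r1 + r2)^2 \<le> (2 * Lam * t)^2" by (rule power_mono) (use r1hi r2hi r10 r20 in auto)
    have s2: "(lam * t / 2) * (lam * t / 2) \<le> r1 * r2"
      by (rule mult_mono) (use r1lo r2lo lam_pos t0 r10 in auto)
    have "8 * \<eta>0 * (r1 + r2)^2 \<le> 8 * \<eta>0 * (2 * Lam * t)^2"
      by (rule mult_left_mono[OF s1]) (use \<eta> in simp)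
    also have "\<dots> = (\<eta>0 * (128 * Lam^2)) * (t^2 / 4)" by (simp add: power2_eq_square algebra_simps)
    also have "\<dots> \<le> lam^2 * (t^2 / 4)" by (rule mult_right_mono[OF \<eta>(3)]) simp
    also have "\<dots> = (lam * t / 2) * (lam * t / 2)" by (simp add: power2_eq_square)
    finally have "8 * \<eta>0 * (r1 + r2)^2 \<le> r1 * r2" using s2 by linarith
    then show ?thesis using r10 r20 by (simp add: field_simps)
  qed
  then have "(norm (f1 + f2))^2 \<le> (1/2)^2" using g2 by (simp add: power2_eq_square)
  then have f12: "norm (f1 + f2) \<le> 1/2" by (rule power2_le_imp_le) simp
  have nf1: "norm f1 = 1" unfolding f1_def using v10 by simp
  have f1f2: "3/2 \<le> norm (f1 - f2)"
  proof -
    have "2 *\<^sub>R f1 = (f1 - f2) + (f1 + f2)" by (simp add: algebra_simps scaleR_2)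
    then have "norm (2 *\<^sub>R f1) \<le> norm (f1 - f2) + norm (f1 + f2)"
      using norm_triangle_ineq[of "f1 - f2" "f1 + f2"] by simp
    then show ?thesis using nf1 f12 by simp
  qed
  have inner_bd: "ennreal ((2 * t) powr (1 - q)) \<le> inner_int x" if x: "x \<in> {a - \<tau> .. a - \<tau> + 2 * \<tau>}" for x
  proof -
    have xa: "\<bar>x - a\<bar> \<le> \<tau>" using x by auto
    have "norm (u x - u a) \<le> Lam * \<bar>x - a\<bar>" using chord_Lam_abs[of x a] by simp
    also have "\<dots> \<le> Lam * \<tau>" by (rule mult_left_mono[OF xa]) (use Lam_pos in simp)
    also have "\<dots> = \<delta>" unfolding \<tau>_def using Lam_pos by simp
    finally have xua: "norm (u x - u a) \<le> \<delta>" .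
    have xQ: "norm (u x - Q) \<le> 2 * \<delta>"
    proof -
      have "u x - Q = (u x - u a) + (u a - u b)" unfolding Q_def by simp
      then have "norm (u x - Q) \<le> norm (u x - u a) + norm (u a - u b)"
        using norm_triangle_ineq[of "u x - u a" "u a - u b"] by simp
      then show ?thesis using xua \<delta>(1) by (simp add: norm_minus_commute)
    qed
    define e1 where "e1 = sig x (b - t)"
    define e2 where "e2 = sig x (b + t)"
    have b1: "norm (f1 - e1) \<le> 1/8"
    proof -
      have "norm (f1 - e1) \<le> 2 * norm (v1 - (u (b - t) - u x)) / norm v1"
        unfolding f1_def e1_def sig_def by (rule unit_diff[OF v10])
      also have "v1 - (u (b - t) - u x) = u x - Q" unfolding v1_def by simp
      also have "2 * norm (u x - Q) / norm v1 \<le> 2 * (2 * \<delta>) / (lam * t / 2)"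
        by (rule frac_le) (use xQ r1lo r1_def lam_pos t0 \<delta>(2) in auto)
      also have "\<dots> = 1/8" using lt \<delta> by (simp add: field_simps)
      finally show ?thesis .
    qed
    have b2: "norm (f2 - e2) \<le> 1/8"
    proof -
      have "norm (f2 - e2) \<le> 2 * norm (v2 - (u (b + t) - u x)) / norm v2"
        unfolding f2_def e2_def sig_def by (rule unit_diff[OF v20])
      also have "v2 - (u (b + t) - u x) = u x - Q" unfolding v2_def by simp
      also have "2 * norm (u x - Q) / norm v2 \<le> 2 * (2 * \<delta>) / (lam * t / 2)"
        by (rule frac_le) (use xQ r2lo r2_def lam_pos t0 \<delta>(2) in auto)
      also have "\<dots> = 1/8" using lt \<delta> by (simp add: field_simps)
      finally show ?thesis .
    qed
    have e12: "1 \<le> norm (sig x (b + t) - sig x (b - t))"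
    proof -
      have "f1 - f2 = (f1 - e1) + (e1 - e2) + (e2 - f2)" by simp
      then have "norm (f1 - f2) \<le> norm (f1 - e1) + norm (e1 - e2) + norm (e2 - f2)"
        using norm_triangle_ineq[of "(f1 - e1) + (e1 - e2)" "e2 - f2"] norm_triangle_ineq[of "f1 - e1" "e1 - e2"]
        by simp
      moreover have "norm (e2 - f2) = norm (f2 - e2)" by (rule norm_minus_commute)
      moreover have "norm (e1 - e2) = norm (sig x (b + t) - sig x (b - t))"
        unfolding e1_def e2_def by (rule norm_minus_commute)
      ultimately show ?thesis using f1f2 b1 b2 by linarith
    qed
    have ne: "u y \<noteq> u x" if y: "y \<in> {b - t .. b + t}" for y
    proof (rule u_neq)
      have "y - x > 0" using y x tt ab by auto
      moreover have "y - x < 1" using y x tt ab h0 by auto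
      ultimately show "y \<noteq> x" "\<bar>y - x\<bar> < 1" by auto
    qed
    have "ennreal ((b + t - (b - t)) powr (1 - q) * 1 powr q) \<le> inner_int x"
      by (rule ext_inner[OF _ _ ne _ e12]) (use t0 t2 h0 in auto)
    then show ?thesis by simp
  qed
  have "ennreal ((2 * t) powr (1 - q)) * ennreal (2 * \<tau>) \<le> En"
    by (rule En_lower[OF _ _ inner_bd]) (use \<tau>0 dL h0 \<tau>_def in auto)
  moreover have "(2 * t) powr (1 - q) * (2 * \<tau>) = (2 / Lam) * (128 / lam) powr (1 - q) * \<delta> powr (2 - q)"
  proof -
    have tt2: "2 * t = (128 / lam) * \<delta>" unfolding t_def by simp
    have "(2 * t) powr (1 - q) = ((128 / lam) * \<delta>) powr (1 - q)" by (simp only: tt2)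
    also have "\<dots> = (128 / lam) powr (1 - q) * \<delta> powr (1 - q)" by (rule powr_mult)
    finally have "(2 * t) powr (1 - q) = (128 / lam) powr (1 - q) * \<delta> powr (1 - q)" .
    moreover have "\<delta> powr (2 - q) = \<delta> powr (1 - q) * \<delta>"
      using powr_add[of \<delta> "1 - q" 1] \<delta>(2) by simp
    moreover have "2 * \<tau> = (2 / Lam) * \<delta>" unfolding \<tau>_def by simp
    ultimately show ?thesis by (simp add: algebra_simps)
  qed
  ultimately show ?thesis using \<tau>0 by (simp add: ennreal_mult'[symmetric])
qed

lemma glob:
  assumes \<eta>: "0 < \<eta>0" "\<eta>0 \<le> 1/2" "\<eta>0 * (128 * Lam^2) \<le> lam^2"
    and h0: "0 < h0" "h0 \<le> 1/2" and En1: "En < ennreal (Cst q \<eta>0 * h0 powr (2 - q))"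
    and d1: "0 < \<delta>1" "130 * \<delta>1 \<le> lam * h0" "130 * \<delta>1 \<le> Lam * h0"
    and En2: "En < ennreal ((2 / Lam) * (128 / lam) powr (1 - q) * \<delta>1 powr (2 - q))"
    and ab: "a < b" "b - a \<le> 1/2"
  shows "min (lam / 2) (2 * \<delta>1) * (b - a) \<le> norm (u b - u a)"
proof (cases "b - a \<le> h0")
  case True
  have c: "(1 - \<eta>0) * L a b < norm (u b - u a)" by (rule chord_good[OF \<eta>(1,2) h0 En1 ab(1) True])
  have "1/2 * (lam * (b - a)) \<le> (1 - \<eta>0) * L a b"
    by (rule mult_mono) (use L_lower[of a b] ab \<eta> lam_pos in auto)
  moreover have "min (lam / 2) (2 * \<delta>1) * (b - a) \<le> lam / 2 * (b - a)"
    by (rule mult_right_mono) (use ab in auto)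
  ultimately show ?thesis using c by simp
next
  case False
  define \<delta> where "\<delta> = norm (u b - u a)"
  have \<delta>0: "\<delta> > 0" unfolding \<delta>_def using u_neq[of b a] ab by auto
  have "\<delta>1 < \<delta>"
  proof (rule ccontr)
    assume "\<not> \<delta>1 < \<delta>"
    then have dd: "\<delta> \<le> \<delta>1" by simp
    have E: "ennreal ((2 / Lam) * (128 / lam) powr (1 - q) * \<delta> powr (2 - q)) \<le> En"
      by (rule ext_energy[OF \<eta> h0 En1 ab(1) _ ab(2) \<delta>_def \<delta>0]) (use False dd d1 in auto)
    have "\<delta>1 powr (2 - q) \<le> \<delta> powr (2 - q)" by (rule powr_mono2') (use q2 \<delta>0 dd in auto)
    then have "(2 / Lam) * (128 / lam) powr (1 - q) * \<delta>1 powr (2 - q) \<le> (2 / Lam) * (128 / lam) powr (1 - q) * \<delta> powr (2 - q)"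
      by (rule mult_left_mono) (use Lam_pos in simp)
    then have "ennreal ((2 / Lam) * (128 / lam) powr (1 - q) * \<delta>1 powr (2 - q)) \<le> En"
      using E by (meson ennreal_leI order.trans)
    then show False using En2 by simp
  qed
  moreover have "min (lam / 2) (2 * \<delta>1) * (b - a) \<le> 2 * \<delta>1 * (b - a)"
    by (rule mult_right_mono) (use ab in auto)
  moreover have "2 * \<delta>1 * (b - a) \<le> \<delta>1" using ab d1 by (simp add: mult.commute mult_left_le)
  ultimately show ?thesis unfolding \<delta>_def by linarith
qed

end


lemma small_pow:
  fixes q A C b :: real
  assumes q: "q > 2" and C: "C > 0" and b: "b > 0"
  shows "\<exists>h. 0 < h \<and> h \<le> b \<and> A < C * h powr (2 - q)"
proof -
  define e where "e = 2 - q"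
  have e0: "e < 0" unfolding e_def using q by simp
  define t where "t = ((\<bar>A\<bar> + 1) / C) powr (1 / e)"
  have t0: "t > 0" unfolding t_def using C by simp
  have te: "t powr e = (\<bar>A\<bar> + 1) / C"
    unfolding t_def using e0 C by (simp add: powr_powr)
  define h where "h = min b t"
  have h0: "h > 0" unfolding h_def using b t0 by simp
  have "t powr e \<le> h powr e" by (rule powr_mono2') (use e0 h0 h_def in auto)
  then have "(\<bar>A\<bar> + 1) / C \<le> h powr e" using te by simp
  then have "\<bar>A\<bar> + 1 \<le> C * h powr e" using C by (simp add: field_simps)
  then have "A < C * h powr (2 - q)" unfolding e_def by linarith
  then show ?thesis using h0 unfolding h_def by (intro exI[of _ "min b t"]) auto
qed

lemma dist_rep:
  fixes x y :: real
  assumes xy: "x \<in> {0..<1}" "y \<in> {0..<1}" "x \<noteq> y"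
  shows "\<exists>a b. a < b \<and> b - a = circ_dist x y \<and> b - a \<le> 1/2 \<and>
     (\<forall>g :: real \<Rightarrow> 'b::real_normed_vector. periodic1 g \<longrightarrow> norm (g x - g y) = norm (g b - g a))"
proof (cases "y < x")
  case True
  have fr: "frac (x - y) = x - y" using True xy by (simp add: frac_eq)
  show ?thesis
  proof (cases "x - y \<le> 1/2")
    case T2: True
    have c: "circ_dist x y = x - y" unfolding circ_dist_def fr using T2 by simp
    show ?thesis
    proof (intro exI conjI allI impI)
      show "y < x" by (rule True)
      show "x - y = circ_dist x y" using c by simp
      show "x - y \<le> 1/2" by (rule T2)
      fix g :: "real \<Rightarrow> 'b" show "norm (g x - g y) = norm (g x - g y)" by simp
    qed
  next
    case F2: False
    have c: "circ_dist x y = 1 - (x - y)" unfolding circ_dist_def fr using F2 by simp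
    show ?thesis
    proof (intro exI conjI allI impI)
      show "x < y + 1" using xy by simp
      show "y + 1 - x = circ_dist x y" using c by simp
      show "y + 1 - x \<le> 1/2" using F2 by simp
      fix g :: "real \<Rightarrow> 'b" assume "periodic1 g"
      then have "g (y + 1) = g y" unfolding periodic1_def by blast
      then show "norm (g x - g y) = norm (g (y + 1) - g x)" by (simp add: norm_minus_commute)
    qed
  qed
next
  case False
  then have yx: "x < y" using xy by simp
  have fr: "frac (x - y) = x - y + 1"
    using yx xy by (subst frac_unique_iff) auto
  show ?thesis
  proof (cases "y - x \<le> 1/2")
    case T2: True
    have c: "circ_dist x y = y - x" unfolding circ_dist_def fr using T2 by simp
    show ?thesis
    proof (intro exI conjI allI impI)
      show "x < y" by (rule yx)
      show "y - x = circ_dist x y" using c by simp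
      show "y - x \<le> 1/2" by (rule T2)
      fix g :: "real \<Rightarrow> 'b" show "norm (g x - g y) = norm (g y - g x)" by (simp add: norm_minus_commute)
    qed
  next
    case F2: False
    have c: "circ_dist x y = x - y + 1" unfolding circ_dist_def fr using F2 by simp
    show ?thesis
    proof (intro exI conjI allI impI)
      show "y < x + 1" using xy by simp
      show "x + 1 - y = circ_dist x y" using c by simp
      show "x + 1 - y \<le> 1/2" using F2 by simp
      fix g :: "real \<Rightarrow> 'b" assume "periodic1 g"
      then have "g (x + 1) = g x" unfolding periodic1_def by blast
      then show "norm (g x - g y) = norm (g (x + 1) - g y)" by simp
    qed
  qed
qed

lemma circ_pos:
  assumes xy: "x \<in> {0..<1}" "y \<in> {0..<1}" "x \<noteq> y"
  shows "circ_dist x y > 0"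
proof -
  have "frac (x - y) \<noteq> 0"
  proof
    assume "frac (x - y) = 0"
    then have "x - y \<in> \<int>" by (simp add: frac_eq_0_iff)
    then obtain k where k: "x - y = real_of_int k" by (auto elim: Ints_cases)
    have "\<bar>x - y\<bar> < 1" using xy by auto
    then have "k = 0" using k by linarith
    then show False using k xy by simp
  qed
  then have "frac (x - y) > 0" using frac_ge_0[of "x - y"] by linarith
  moreover have "frac (x - y) < 1" by (rule frac_lt_1)
  ultimately show ?thesis unfolding circ_dist_def by simp
qed

lemma diff_bound:
  fixes u v :: "real \<Rightarrow> 'a::euclidean_space"
  assumes du: "\<And>x. u differentiable (at x)" and dv: "\<And>x. v differentiable (at x)"
    and R: "\<And>x. norm (dv v x - dv u x) \<le> R" and ab: "a \<le> b"
  shows "norm ((v b - u b) - (v a - u a)) \<le> R * (b - a)"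
proof -
  have "((\<lambda>t. v t - u t) has_vector_derivative (dv v t - dv u t)) (at t within {a..b})" for t
  proof -
    have hv: "(v has_vector_derivative dv v t) (at t)" using dv[of t] vector_derivative_works by blast
    have hu: "(u has_vector_derivative dv u t) (at t)" using du[of t] vector_derivative_works by blast
    show ?thesis using has_vector_derivative_diff[OF hv hu] by (rule has_vector_derivative_at_within)
  qed
  then have "((\<lambda>t. dv v t - dv u t) has_integral ((v b - u b) - (v a - u a))) {a..b}"
    using fundamental_theorem_of_calculus[OF ab, of "\<lambda>t. v t - u t"] by simp
  moreover have "0 \<le> R" using R[of 0] by (metis norm_ge_zero order_trans)
  ultimately show ?thesis
    using has_integral_bound[of R "\<lambda>t. dv v t - dv u t" _ a b] R ab by auto
qed


theorem corollary3p7: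
  fixes q :: real and lam Lam M :: real
  assumes "q > 2" and "CARD('n) \<ge> 2"
    and "lam > 0" and "Lam > 0" and "M > 0"
  shows "\<exists>R>0. \<forall>(u :: real \<Rightarrow> real ^ 'n) (v :: real \<Rightarrow> real ^ 'n).
      u \<in> curve_class q \<and> (\<forall>x. lam \<le> norm (dv u x) \<and> norm (dv u x) \<le> Lam)
      \<and> TP q u \<le> ennreal M
      \<and> v \<in> W_space q \<and> (\<forall>x. norm (dv v x - dv u x) \<le> R)
      \<longrightarrow> bil v \<le> 2 * bil u \<and> bil u < \<infinity>"
proof -
  note q = assms(1) and lam = assms(3) and Lam = assms(4) and M = assms(5)
  define \<eta>0 where "\<eta>0 = min (1/2) (lam^2 / (128 * Lam^2))"
  have \<eta>0: "0 < \<eta>0" "\<eta>0 \<le> 1/2" "\<eta>0 * (128 * Lam^2) \<le> lam^2"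
  proof -
    show "0 < \<eta>0" unfolding \<eta>0_def using lam Lam by simp
    show "\<eta>0 \<le> 1/2" unfolding \<eta>0_def by simp
    have "\<eta>0 \<le> lam^2 / (128 * Lam^2)" unfolding \<eta>0_def by simp
    then show "\<eta>0 * (128 * Lam^2) \<le> lam^2" using Lam by (simp add: field_simps)
  qed
  define C1 where "C1 = Cst q \<eta>0"
  have C1: "C1 > 0" unfolding C1_def by (rule Cst_pos[OF q \<eta>0(1)])
  obtain h0 where h0: "0 < h0" "h0 \<le> 1/2" "q * M < C1 * h0 powr (2 - q)"
    using small_pow[OF q C1, of "1/2" "q * M"] by auto
  define C2 where "C2 = (2 / Lam) * (128 / lam) powr (1 - q)"
  have C2: "C2 > 0" unfolding C2_def using lam Lam by simp
  have bpos: "min (lam * h0 / 130) (Lam * h0 / 130) > 0" using lam Lam h0 by simp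
  obtain \<delta>1 where d1: "0 < \<delta>1" "\<delta>1 \<le> min (lam * h0 / 130) (Lam * h0 / 130)" "q * M < C2 * \<delta>1 powr (2 - q)"
    using small_pow[OF q C2 bpos, of "q * M"] by auto
  define C0 where "C0 = min (lam / 2) (2 * \<delta>1)"
  have C0: "C0 > 0" unfolding C0_def using lam d1 by simp
  show ?thesis
  proof (intro exI[of _ "C0 / 2"] conjI allI impI)
    show "C0 / 2 > 0" using C0 by simp
    fix u v :: "real \<Rightarrow> real ^ 'n"
    assume H: "u \<in> curve_class q \<and> (\<forall>x. lam \<le> norm (dv u x) \<and> norm (dv u x) \<le> Lam)
      \<and> TP q u \<le> ennreal M \<and> v \<in> W_space q \<and> (\<forall>x. norm (dv v x - dv u x) \<le> C0 / 2)"
    have uW: "u \<in> W_space q" and uinj: "inj_on u {0..<1}" using H unfolding curve_class_def by auto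
    have uper: "periodic1 u" and udiff: "\<And>x. u differentiable (at x)" and ucont: "continuous_on UNIV (dv u)"
      using uW unfolding W_space_def by auto
    have vper: "periodic1 v" and vdiff: "\<And>x. v differentiable (at x)"
      using H unfolding W_space_def by auto
    have Rb: "\<And>x. norm (dv v x - dv u x) \<le> C0 / 2" using H by auto
    interpret U: curve u lam Lam q
      by unfold_locales (use uper udiff ucont uinj H lam q in auto)
    have EnM: "U.En \<le> ennreal (q * M)"
    proof -
      have "ennreal q * TP q u \<le> ennreal q * ennreal M" using H by (intro mult_left_mono) auto
      moreover have "ennreal q * TP q u = U.En"
      proof -
        have "ennreal q * ennreal (1 / q) = 1" using q by (simp add: ennreal_mult[symmetric])
        then show ?thesis unfolding U.TP_En by (simp add: mult.assoc[symmetric])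
      qed
      moreover have "ennreal q * ennreal M = ennreal (q * M)" using q M by (simp add: ennreal_mult)
      ultimately show ?thesis by simp
    qed
    have En1: "U.En < ennreal (Cst q \<eta>0 * h0 powr (2 - q))"
    proof -
      have "ennreal (q * M) < ennreal (C1 * h0 powr (2 - q))"
        by (rule ennreal_lessI) (use h0 q M in \<open>auto intro: less_le_trans[OF _ h0(3)[THEN less_imp_le]]\<close>)
      then show ?thesis using EnM unfolding C1_def by simp
    qed
    have En2: "U.En < ennreal ((2 / Lam) * (128 / lam) powr (1 - q) * \<delta>1 powr (2 - q))"
    proof -
      have qM0: "0 < q * M" using q M by simp
      have "ennreal (q * M) < ennreal (C2 * \<delta>1 powr (2 - q))"
        by (rule ennreal_lessI) (use d1(3) qM0 in linarith)+
      then show ?thesis using EnM unfolding C2_def by simp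
    qed
    have gl: "C0 * (b - a) \<le> norm (u b - u a)" if "a < b" "b - a \<le> 1/2" for a b
      unfolding C0_def
      by (rule U.glob[OF \<eta>0 h0(1,2) En1 d1(1) _ _ En2 that]) (use d1(2) in auto)
    define S where "S = {(x, y). x \<in> {0..<1::real} \<and> y \<in> {0..<1::real} \<and> x \<noteq> y}"
    have keyu: "u x \<noteq> u y \<and> C0 * circ_dist x y \<le> norm (u x - u y)" if "(x, y) \<in> S" for x y
    proof -
      have xy: "x \<in> {0..<1}" "y \<in> {0..<1}" "x \<noteq> y" using that unfolding S_def by auto
      obtain a b where ab: "a < b" "b - a = circ_dist x y" "b - a \<le> 1/2"
        and g: "\<forall>g :: real \<Rightarrow> real ^ 'n. periodic1 g \<longrightarrow> norm (g x - g y) = norm (g b - g a)"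
        using dist_rep[OF xy] by blast
      have "u x \<noteq> u y" by (rule U.u_neq) (use xy in auto)
      moreover have "C0 * circ_dist x y \<le> norm (u x - u y)" using gl[OF ab(1,3)] ab(2) g uper by simp
      ultimately show ?thesis by simp
    qed
    let ?Fu = "\<lambda>p. if u (fst p) = u (snd p) then \<infinity> else ereal (circ_dist (fst p) (snd p) / norm (u (fst p) - u (snd p)))"
    let ?Fv = "\<lambda>p. if v (fst p) = v (snd p) then \<infinity> else ereal (circ_dist (fst p) (snd p) / norm (v (fst p) - v (snd p)))"
    have bilu: "bil u = (SUP p \<in> S. ?Fu p)" unfolding bil_def S_def by simp
    have bilv: "bil v = (SUP p \<in> S. ?Fv p)" unfolding bil_def S_def by simp
    have up: "bil u \<le> ereal (1 / C0)"
      unfolding bilu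
    proof (rule SUP_least)
      fix p assume p: "p \<in> S"
      obtain x y where pxy: "p = (x, y)" by (cases p)
      have k: "u x \<noteq> u y" "C0 * circ_dist x y \<le> norm (u x - u y)" using keyu p pxy by auto
      have "circ_dist x y / norm (u x - u y) \<le> 1 / C0"
        using k C0 by (simp add: field_simps)
      then show "?Fu p \<le> ereal (1 / C0)" using k pxy by simp
    qed
    have p0: "(0, 1/2) \<in> S" unfolding S_def by simp
    have lo: "?Fu (0, 1/2) \<le> bil u" unfolding bilu by (rule SUP_upper[OF p0])
    have lo0: "0 < ?Fu (0, 1/2)"
    proof -
      have k: "u 0 \<noteq> u (1/2)" using keyu[OF p0] by simp
      have "circ_dist 0 (1/2) > 0" by (rule circ_pos) auto
      then show ?thesis using k by simp
    qed
    define Br where "Br = real_of_ereal (bil u)"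
    have bfin: "bil u \<noteq> \<infinity>" "bil u \<noteq> -\<infinity>" using up lo lo0 by auto
    have Brb: "bil u = ereal Br" unfolding Br_def using bfin by (cases "bil u") auto
    have "0 < ereal Br" using order_less_le_trans[OF lo0 lo] unfolding Brb .
    then have Br0: "Br > 0" by simp
    have Br1: "Br \<le> 1 / C0" using up Brb by simp
    have C0Br: "C0 \<le> 1 / Br" using Br1 Br0 C0 by (simp add: field_simps)
    have keyu2: "circ_dist x y \<le> Br * norm (u x - u y)" if p: "(x, y) \<in> S" for x y
    proof -
      have k: "u x \<noteq> u y" using keyu p by auto
      have "?Fu (x, y) \<le> bil u" unfolding bilu by (rule SUP_upper[OF p])
      then have "circ_dist x y / norm (u x - u y) \<le> Br" using k Brb by simp
      then show ?thesis using k by (simp add: field_simps)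
    qed
    have "bil v \<le> ereal (2 * Br)"
      unfolding bilv
    proof (rule SUP_least)
      fix p assume p: "p \<in> S"
      obtain x y where pxy: "p = (x, y)" by (cases p)
      have xy: "x \<in> {0..<1}" "y \<in> {0..<1}" "x \<noteq> y" using p pxy unfolding S_def by auto
      obtain a b where ab: "a < b" "b - a = circ_dist x y" "b - a \<le> 1/2"
        and g: "\<forall>g :: real \<Rightarrow> real ^ 'n. periodic1 g \<longrightarrow> norm (g x - g y) = norm (g b - g a)"
        using dist_rep[OF xy] by blast
      define c where "c = circ_dist x y"
      have c0: "c > 0" unfolding c_def by (rule circ_pos[OF xy])
      have nu: "norm (u x - u y) = norm (u b - u a)" using g uper by simp
      have nv: "norm (v x - v y) = norm (v b - v a)" using g vper by simp
      have db: "norm ((v b - u b) - (v a - u a)) \<le> C0 / 2 * (b - a)"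
        by (rule diff_bound[OF udiff vdiff Rb]) (use ab in simp)
      have tri: "norm (u b - u a) \<le> norm (v b - v a) + norm ((v b - u b) - (v a - u a))"
      proof -
        have "u b - u a = (v b - v a) - ((v b - u b) - (v a - u a))" by simp
        then show ?thesis using norm_triangle_ineq4[of "v b - v a" "(v b - u b) - (v a - u a)"] by simp
      qed
      have cu: "c \<le> Br * norm (u x - u y)" unfolding c_def by (rule keyu2[OF p[unfolded pxy]])
      have "C0 / 2 * c \<le> (1 / Br) / 2 * c" using C0Br c0 by (intro mult_right_mono) auto
      then have "C0 / 2 * c \<le> c / (2 * Br)" by simp
      moreover have "c / Br \<le> norm (u x - u y)" using cu Br0 by (simp add: field_simps)
      moreover have db': "norm ((v b - u b) - (v a - u a)) \<le> C0 / 2 * c" using db ab(2) unfolding c_def by simp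
      ultimately have "c / Br - c / (2 * Br) \<le> norm (v x - v y)"
        using tri nu nv by linarith
      moreover have "c / Br - c / (2 * Br) = c / (2 * Br)" using Br0 by (simp add: field_simps)
      ultimately have nvl: "c / (2 * Br) \<le> norm (v x - v y)" by simp
      have "c / (2 * Br) > 0" using c0 Br0 by simp
      then have vne: "v x \<noteq> v y" using nvl by auto
      have "c / norm (v x - v y) \<le> 2 * Br"
        using nvl vne Br0 c0 by (simp add: field_simps)
      then show "?Fv p \<le> ereal (2 * Br)" using vne pxy unfolding c_def by simp
    qed
    then show "bil v \<le> 2 * bil u" using Brb by simp
    show "bil u < \<infinity>" using Brb by simp
  qed
qed


end
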